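(* Let $n \ge 2$ and let $\lambda = (n-1, n-2, \ldots, 2, 1)$. Then the moment variety $\mathcal{M}_{n,\lambda}$ is the projective toric variety of the Birkhoff polytope $B_n$. Under the identification of the coordinate $m_{i_1 i_2 \cdots i_n}$ (where $(i_1,\ldots,i_n)$ is a permutation of $\{0,1,\ldots,n-1\}$) with the $n\times n$ permutation matrix having a $1$ in position $(k, i_k+1)$ for each $k$, this variety lives in $\mathbb{P}^{n!-1}$, and it has dimension $(n-1)^2$.
   Context: Work over $\mathbb{C}$. For a partition $\lambda$ of $d$ with at most $n$ parts, let $N_\lambda$ be the set of vectors $(i_1,\ldots,i_n) \in \mathbb{Z}_{\ge 0}^n$ whose multiset of nonzero entries equals $\lambda$. The moment variety $\mathcal{M}_{n,\lambda} \subset \mathbb{P}^{|N_\lambda|-1}$, with coordinates $m_{i_1\cdots i_n}$ for $(i_1,\ldots,i_n)\in N_\lambda$, is the Zariski closure of the image of the monomial map $$(\mu_{ki})_{k\in[n],\, i\in[d]} \mapsto \bigl(\mu_{1 i_1}\mu_{2 i_2}\cdots \mu_{n i_n}\bigr)_{(i_1,\ldots,i_n)\in N_\lambda},$$ with the convention $\mu_{k0}=1$. The Birkhoff polytope $B_n$ is the convex hull of the $n!$ permutation matrices of size $n\times n$. The toric variety of $B_n$ is the Zariski closure of the image of the monomial map $t=(t_{ab}) \mapsto (t^{P})_{P}$, where $P$ ranges over the permutation matrices and $t^P=\prod_{a,b} t_{ab}^{P_{ab}}$. *)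

theory Defs
  imports Complex_Main "HOL-Library.Poly_Mapping" "HOL-Library.Multiset" "HOL-Combinatorics.Permutations"
begin

text \<open>A projective variety in P^{|I|-1} with coordinates indexed by a finite set I is
represented by its affine cone in C^I; points of C^I are functions that vanish outside I.\<close>

definition ambient :: "'i set \<Rightarrow> ('i \<Rightarrow> complex) set" where
  "ambient I = {x. \<forall>i. i \<notin> I \<longrightarrow> x i = 0}"

definition mpoly_eval :: "(('i \<Rightarrow>\<^sub>0 nat) \<Rightarrow>\<^sub>0 complex) \<Rightarrow> ('i \<Rightarrow> complex) \<Rightarrow> complex" where
  "mpoly_eval p x = Sum_any (\<lambda>mo. Poly_Mapping.lookup p mo * Prod_any (\<lambda>v. x v ^ Poly_Mapping.lookup mo v))"

definition zariski_closed :: "'i set \<Rightarrow> ('i \<Rightarrow> complex) set \<Rightarrow> bool" where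
  "zariski_closed I S \<longleftrightarrow>
     (\<exists>F. S = {x \<in> ambient I. \<forall>p\<in>F. mpoly_eval p x = 0})"

definition zariski_closure :: "'i set \<Rightarrow> ('i \<Rightarrow> complex) set \<Rightarrow> ('i \<Rightarrow> complex) set" where
  "zariski_closure I S = \<Inter>{T. zariski_closed I T \<and> S \<subseteq> T}"

text \<open>Affine cone of the projective closure of the image of a (coordinatewise) map f.\<close>
definition proj_closure_cone :: "'i set \<Rightarrow> ('p \<Rightarrow> 'i \<Rightarrow> complex) \<Rightarrow> ('i \<Rightarrow> complex) set" where
  "proj_closure_cone I f =
     zariski_closure I {(\<lambda>i. if i \<in> I then c * f p i else 0) | c p. True}"

definition irreducible_closed :: "'i set \<Rightarrow> ('i \<Rightarrow> complex) set \<Rightarrow> bool" where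
  "irreducible_closed I S \<longleftrightarrow> zariski_closed I S \<and> S \<noteq> {} \<and>
     (\<forall>A B. zariski_closed I A \<and> zariski_closed I B \<and> S = A \<union> B \<longrightarrow> S = A \<or> S = B)"

definition krull_dim :: "'i set \<Rightarrow> ('i \<Rightarrow> complex) set \<Rightarrow> nat" where
  "krull_dim I V = Sup {k. \<exists>C :: nat \<Rightarrow> ('i \<Rightarrow> complex) set.
      (\<forall>j\<le>k. irreducible_closed I (C j) \<and> C j \<subseteq> V) \<and> (\<forall>j<k. C j \<subset> C (Suc j))}"

text \<open>Dimension of the projective variety whose affine cone is V.\<close>
definition proj_dim :: "'i set \<Rightarrow> ('i \<Rightarrow> complex) set \<Rightarrow> nat" where
  "proj_dim I V = krull_dim I V - 1"

text \<open>Index vectors (i_1,...,i_n) as lists of length n; partition lambda as a list.\<close>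
definition N_lambda :: "nat \<Rightarrow> nat list \<Rightarrow> nat list set" where
  "N_lambda n lam = {is. length is = n \<and> mset (filter (\<lambda>i. i \<noteq> 0) is) = mset lam}"

text \<open>Parameters mu k i (k = 0..n-1 corresponds to k+1 in the paper), with mu_{k0} = 1.\<close>
definition moment_coord :: "nat \<Rightarrow> (nat \<Rightarrow> nat \<Rightarrow> complex) \<Rightarrow> nat list \<Rightarrow> complex" where
  "moment_coord n mu is = (\<Prod>k<n. if is ! k = 0 then 1 else mu k (is ! k))"

definition moment_variety :: "nat \<Rightarrow> nat list \<Rightarrow> (nat list \<Rightarrow> complex) set" where
  "moment_variety n lam = proj_closure_cone (N_lambda n lam) (moment_coord n)"

definition staircase :: "nat \<Rightarrow> nat list" where
  "staircase n = rev [1..<n]"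

text \<open>n x n matrices as functions on index pairs (0-indexed), zero outside the n x n block.\<close>
definition perm_matrix :: "nat \<Rightarrow> (nat \<Rightarrow> nat) \<Rightarrow> (nat \<times> nat \<Rightarrow> nat)" where
  "perm_matrix n \<sigma> = (\<lambda>(a, b). if a < n \<and> b < n \<and> b = \<sigma> a then 1 else 0)"

definition perm_matrices :: "nat \<Rightarrow> (nat \<times> nat \<Rightarrow> nat) set" where
  "perm_matrices n = {perm_matrix n \<sigma> | \<sigma>. \<sigma> permutes {..<n}}"

definition toric_coord :: "nat \<Rightarrow> (nat \<times> nat \<Rightarrow> complex) \<Rightarrow> (nat \<times> nat \<Rightarrow> nat) \<Rightarrow> complex" where
  "toric_coord n t P = (\<Prod>ab\<in>{..<n} \<times> {..<n}. t ab ^ P ab)"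

definition birkhoff_toric_variety :: "nat \<Rightarrow> ((nat \<times> nat \<Rightarrow> nat) \<Rightarrow> complex) set" where
  "birkhoff_toric_variety n = proj_closure_cone (perm_matrices n) (toric_coord n)"

text \<open>Identification: m_{i_1...i_n} corresponds to the permutation matrix with 1 in
position (k, i_k + 1) (1-indexed), i.e. (k-1, i_k) 0-indexed.\<close>
definition ident_matrix :: "nat \<Rightarrow> nat list \<Rightarrow> (nat \<times> nat \<Rightarrow> nat)" where
  "ident_matrix n is = (\<lambda>(a, b). if a < n \<and> b < n \<and> b = is ! a then 1 else 0)"

end

theory Submission
  imports Defs "HOL-Combinatorics.Multiset_Permutations" "HOL-Computational_Algebra.Polynomial"
    "HOL-Library.Function_Algebras"
begin

definition mono_eval :: "('i \<Rightarrow>\<^sub>0 nat) \<Rightarrow> ('i \<Rightarrow> complex) \<Rightarrow> complex" where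
  "mono_eval m x = Prod_any (\<lambda>v. x v ^ Poly_Mapping.lookup m v)"

definition mdeg :: "('i \<Rightarrow>\<^sub>0 nat) \<Rightarrow> nat" where
  "mdeg m = (\<Sum>v\<in>Poly_Mapping.keys m. Poly_Mapping.lookup m v)"

lemma mono_eval_fin: "mono_eval m x = (\<Prod>v\<in>Poly_Mapping.keys m. x v ^ Poly_Mapping.lookup m v)"
  unfolding mono_eval_def
  by (rule Prod_any.expand_superset) (auto simp: in_keys_iff, metis gr0I power_0)

lemma mpoly_eval_fin:
  "mpoly_eval p x = (\<Sum>mo\<in>Poly_Mapping.keys p. Poly_Mapping.lookup p mo * mono_eval mo x)"
  unfolding mpoly_eval_def mono_eval_def
  by (rule Sum_any.expand_superset) (auto simp: in_keys_iff)

lemma mpoly_eval_any: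
  "mpoly_eval p x = Sum_any (\<lambda>mo. Poly_Mapping.lookup p mo * mono_eval mo x)"
  unfolding mpoly_eval_def mono_eval_def by simp

lemma fin_aux: "finite {mo. Poly_Mapping.lookup p mo * (f mo::complex) \<noteq> 0}"
  by (rule finite_subset[of _ "Poly_Mapping.keys p"]) (auto simp: in_keys_iff)

lemma eval_add: "mpoly_eval (p + q) x = mpoly_eval p x + mpoly_eval q x"
  unfolding mpoly_eval_any lookup_add distrib_right
  by (rule Sum_any.distrib) (rule fin_aux)+

lemma eval_zero[simp]: "mpoly_eval 0 x = 0"
  unfolding mpoly_eval_any by simp

lemma eval_single: "mpoly_eval (Poly_Mapping.single m c) x = c * mono_eval m x"
proof -
  have "mpoly_eval (Poly_Mapping.single m c) x = (\<Sum>mo\<in>{m}. Poly_Mapping.lookup (Poly_Mapping.single m c) mo * mono_eval mo x)"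
    unfolding mpoly_eval_any
    by (rule Sum_any.expand_superset) (auto simp: lookup_single when_def)
  then show ?thesis by simp
qed

lemma mono_eval_add: "mono_eval (m1 + m2) x = mono_eval m1 x * mono_eval m2 x"
proof -
  have f: "finite {v. x v ^ Poly_Mapping.lookup m v \<noteq> 1}" for m :: "'a \<Rightarrow>\<^sub>0 nat"
    by (rule finite_subset[of _ "Poly_Mapping.keys m"]) (auto simp: in_keys_iff, metis gr0I power_0)
  show ?thesis
    unfolding mono_eval_def lookup_add power_add
    by (rule Prod_any.distrib[OF f f])
qed

lemma mono_eval_zero[simp]: "mono_eval 0 x = 1"
  unfolding mono_eval_fin by simp

lemma update_as_add: "a \<notin> Poly_Mapping.keys f \<Longrightarrow> Poly_Mapping.update a b f = f + Poly_Mapping.single a b"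
  by (rule poly_mapping_eqI) (auto simp: lookup_update lookup_add lookup_single in_keys_iff when_def)

lemma eval_single_mult:
  "mpoly_eval (Poly_Mapping.single a c * q) x = c * mono_eval a x * mpoly_eval q x"
proof (induction q rule: update_induct)
  case const
  then show ?case by simp
next
  case (update f k b)
  then show ?case
    by (simp add: update_as_add distrib_left eval_add mult_single eval_single mono_eval_add algebra_simps)
qed

lemma eval_mult_single:
  "mpoly_eval (q * Poly_Mapping.single a c) x = c * mono_eval a x * mpoly_eval q x"
  by (metis mult.commute eval_single_mult)

lemma eval_mult: "mpoly_eval (p * q) x = mpoly_eval p x * mpoly_eval q x"
proof (induction p rule: update_induct)
  case const
  then show ?case by simp
next
  case (update f k b)
  then show ?case
    by (simp add: update_as_add distrib_right eval_add eval_single_mult eval_mult_single eval_single algebra_simps)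
qed

lemma eval_const: "mpoly_eval (Poly_Mapping.single 0 c) x = c"
  by (simp add: eval_single)

lemma eval_var: "mpoly_eval (Poly_Mapping.single (Poly_Mapping.single v 1) 1) x = x v"
  by (simp add: eval_single mono_eval_fin)

lemma mdeg_add: "mdeg (m1 + m2) = mdeg m1 + mdeg m2"
proof -
  have "mdeg m = Sum_any (Poly_Mapping.lookup m)" for m :: "'a \<Rightarrow>\<^sub>0 nat"
    unfolding mdeg_def by (rule Sum_any.expand_superset[symmetric]) (auto simp: in_keys_iff)
  then show ?thesis
    by (simp add: lookup_add Sum_any.distrib)
qed

lemma mdeg_zero[simp]: "mdeg 0 = 0" by (simp add: mdeg_def)
lemma mdeg_var[simp]: "mdeg (Poly_Mapping.single v (1::nat)) = 1" by (simp add: mdeg_def)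

definition pf :: "nat \<Rightarrow> (('i \<Rightarrow> complex) \<Rightarrow> complex) \<Rightarrow> bool" where
  "pf D g \<longleftrightarrow> (\<exists>p. g = mpoly_eval p \<and> (\<forall>m\<in>Poly_Mapping.keys p. mdeg m \<le> D))"

definition pfany :: "(('i \<Rightarrow> complex) \<Rightarrow> complex) \<Rightarrow> bool" where
  "pfany g \<longleftrightarrow> (\<exists>p. g = mpoly_eval p)"

lemma pf_pfany: "pf D g \<Longrightarrow> pfany g"
  unfolding pf_def pfany_def by blast

lemma pfany_pf: "pfany g \<Longrightarrow> \<exists>D. pf D g"
proof -
  assume "pfany g"
  then obtain p where p: "g = mpoly_eval p" unfolding pfany_def by blast
  have "\<forall>m\<in>Poly_Mapping.keys p. mdeg m \<le> Max (mdeg ` Poly_Mapping.keys p)"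
    by simp
  with p show ?thesis unfolding pf_def by blast
qed

lemma pf_const: "pf D (\<lambda>x. c)"
  unfolding pf_def
  by (rule exI[of _ "Poly_Mapping.single 0 c"]) (auto simp: eval_const fun_eq_iff)

lemma pf_var: "1 \<le> D \<Longrightarrow> pf D (\<lambda>x. x v)"
  unfolding pf_def
proof (rule exI[of _ "Poly_Mapping.single (Poly_Mapping.single v 1) 1"], intro conjI)
  show "(\<lambda>x. x v) = mpoly_eval (Poly_Mapping.single (Poly_Mapping.single v 1) 1)"
    by (rule ext) (rule eval_var[symmetric])
  show "1 \<le> D \<Longrightarrow> \<forall>m\<in>Poly_Mapping.keys (Poly_Mapping.single (Poly_Mapping.single v 1) (1::complex)). mdeg m \<le> D"
    using mdeg_var[of v] by simp
qed

lemma pf_add: "pf D f \<Longrightarrow> pf D g \<Longrightarrow> pf D (\<lambda>x. f x + g x)"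
proof -
  assume "pf D f" "pf D g"
  then obtain p q where p: "f = mpoly_eval p" "\<forall>m\<in>Poly_Mapping.keys p. mdeg m \<le> D"
    and q: "g = mpoly_eval q" "\<forall>m\<in>Poly_Mapping.keys q. mdeg m \<le> D" unfolding pf_def by blast
  have "(\<lambda>x. f x + g x) = mpoly_eval (p + q)" by (simp add: p q eval_add fun_eq_iff)
  moreover have "\<forall>m\<in>Poly_Mapping.keys (p + q). mdeg m \<le> D" using keys_add[of p q] p q by blast
  ultimately show ?thesis unfolding pf_def by blast
qed

lemma pf_mult: "pf D1 f \<Longrightarrow> pf D2 g \<Longrightarrow> pf (D1 + D2) (\<lambda>x. f x * g x)"
proof -
  assume "pf D1 f" "pf D2 g"
  then obtain p q where p: "f = mpoly_eval p" "\<forall>m\<in>Poly_Mapping.keys p. mdeg m \<le> D1"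
    and q: "g = mpoly_eval q" "\<forall>m\<in>Poly_Mapping.keys q. mdeg m \<le> D2" unfolding pf_def by blast
  have "(\<lambda>x. f x * g x) = mpoly_eval (p * q)" by (simp add: p q eval_mult fun_eq_iff)
  moreover have "\<forall>m\<in>Poly_Mapping.keys (p * q). mdeg m \<le> D1 + D2"
  proof
    fix m assume "m \<in> Poly_Mapping.keys (p * q)"
    then obtain a b where "m = a + b" "a \<in> Poly_Mapping.keys p" "b \<in> Poly_Mapping.keys q"
      using keys_mult[of p q] by blast
    then show "mdeg m \<le> D1 + D2" using p q by (simp add: mdeg_add add_mono)
  qed
  ultimately show ?thesis unfolding pf_def by blast
qed

lemma pf_mono: "D \<le> D' \<Longrightarrow> pf D f \<Longrightarrow> pf D' f"
  unfolding pf_def using order_trans by blast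

lemma pf_scale: "pf D f \<Longrightarrow> pf D (\<lambda>x. c * f x)"
proof -
  assume "pf D f"
  from pf_mult[OF pf_const[of 0 c] this] show ?thesis by simp
qed

lemma pf_sum: "finite A \<Longrightarrow> (\<And>j. j \<in> A \<Longrightarrow> pf D (f j)) \<Longrightarrow> pf D (\<lambda>x. \<Sum>j\<in>A. f j x)"
proof (induction A rule: finite_induct)
  case empty show ?case using pf_const[of D 0] by simp
next
  case (insert a F)
  then have "pf D (\<lambda>x. f a x + (\<Sum>j\<in>F. f j x))" by (intro pf_add) auto
  then show ?case using insert.hyps by simp
qed

lemma pfany_const: "pfany (\<lambda>x. c)" by (rule pf_pfany[OF pf_const])
lemma pfany_var: "pfany (\<lambda>x. x v)" by (rule pf_pfany[OF pf_var[of 1]]) simp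
lemma pfany_add: "pfany f \<Longrightarrow> pfany g \<Longrightarrow> pfany (\<lambda>x. f x + g x)"
proof -
  assume "pfany f" "pfany g"
  then obtain D1 D2 where "pf D1 f" "pf D2 g" using pfany_pf by blast
  then have "pf (D1 + D2) f" "pf (D1 + D2) g" using pf_mono[of D1 "D1+D2"] pf_mono[of D2 "D1+D2"] by auto
  then show ?thesis by (intro pf_pfany[OF pf_add])
qed
lemma pfany_mult: "pfany f \<Longrightarrow> pfany g \<Longrightarrow> pfany (\<lambda>x. f x * g x)"
proof -
  assume "pfany f" "pfany g"
  then obtain D1 D2 where "pf D1 f" "pf D2 g" using pfany_pf by blast
  then show ?thesis by (intro pf_pfany[OF pf_mult])
qed
lemma pfany_eval: "pfany (mpoly_eval p)" unfolding pfany_def by blast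

lemma K_sum:
  assumes add: "\<And>f g. f \<in> K \<Longrightarrow> g \<in> K \<Longrightarrow> (\<lambda>z. f z + g z) \<in> K"
    and const: "\<And>c. (\<lambda>z. c) \<in> K"
  shows "finite A \<Longrightarrow> (\<And>a. a \<in> A \<Longrightarrow> f a \<in> K) \<Longrightarrow> (\<lambda>z. \<Sum>a\<in>A. f a z) \<in> K"
proof (induction A rule: finite_induct)
  case empty then show ?case using const by simp
next
  case (insert x F) then show ?case using add[of "f x" "\<lambda>z. \<Sum>a\<in>F. f a z"] by simp
qed

lemma K_prod:
  assumes mult: "\<And>f g. f \<in> K \<Longrightarrow> g \<in> K \<Longrightarrow> (\<lambda>z. f z * g z) \<in> K"
    and const: "\<And>c. (\<lambda>z. c) \<in> K"
  shows "finite A \<Longrightarrow> (\<And>a. a \<in> A \<Longrightarrow> f a \<in> K) \<Longrightarrow> (\<lambda>z. \<Prod>a\<in>A. f a z) \<in> K"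
proof (induction A rule: finite_induct)
  case empty then show ?case using const by simp
next
  case (insert x F) then show ?case using mult[of "f x" "\<lambda>z. \<Prod>a\<in>F. f a z"] by simp
qed

lemma K_power:
  assumes mult: "\<And>f g. f \<in> K \<Longrightarrow> g \<in> K \<Longrightarrow> (\<lambda>z. f z * g z) \<in> K"
    and const: "\<And>c. (\<lambda>z. c) \<in> K"
  shows "f \<in> K \<Longrightarrow> (\<lambda>z. f z ^ n) \<in> K"
  by (induction n) (auto intro: const mult)

lemma eval_comp_closed:
  fixes K :: "('z \<Rightarrow> complex) set"
  assumes const: "\<And>c. (\<lambda>z. c) \<in> K"
    and add: "\<And>f g. f \<in> K \<Longrightarrow> g \<in> K \<Longrightarrow> (\<lambda>z. f z + g z) \<in> K"
    and mult: "\<And>f g. f \<in> K \<Longrightarrow> g \<in> K \<Longrightarrow> (\<lambda>z. f z * g z) \<in> K"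
    and coord: "\<And>v. (\<lambda>z. F z v) \<in> K"
  shows "(\<lambda>z. mpoly_eval p (F z)) \<in> K"
proof -
  have m: "(\<lambda>z. mono_eval mo (F z)) \<in> K" for mo
    unfolding mono_eval_fin
    by (rule K_prod[OF mult const]) (auto intro: K_power[OF mult const] coord)
  show ?thesis
    unfolding mpoly_eval_fin
    by (rule K_sum[OF add const]) (auto intro: mult const m)
qed

lemma pfany_comp:
  assumes "\<And>v. pfany (\<lambda>z. F z v)"
  shows "pfany (\<lambda>z. mpoly_eval p (F z))"
  using eval_comp_closed[of "Collect pfany" F p] assms pfany_const pfany_add pfany_mult by auto

lemma pfany_comp':
  assumes "pfany g" "\<And>v. pfany (\<lambda>z. F z v)"
  shows "pfany (\<lambda>z. g (F z))"
  using assms(1) pfany_comp[OF assms(2)] unfolding pfany_def[of g] by auto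

subsection \<open>Zariski topology\<close>

lemma closed_zero_set:
  assumes "\<And>g. g \<in> G \<Longrightarrow> pfany g"
  shows "zariski_closed I {x \<in> ambient I. \<forall>g\<in>G. g x = 0}"
proof -
  define P where "P = (\<lambda>g. SOME p. g = mpoly_eval p) ` G"
  have "g = mpoly_eval (SOME p. g = mpoly_eval p)" if "g \<in> G" for g
    using assms[OF that] unfolding pfany_def by (rule someI_ex)
  then have "{x \<in> ambient I. \<forall>g\<in>G. g x = 0} = {x \<in> ambient I. \<forall>p\<in>P. mpoly_eval p x = 0}"
    unfolding P_def by auto
  then show ?thesis unfolding zariski_closed_def by blast
qed

lemma closed_D:
  assumes "zariski_closed I S"
  obtains G where "\<And>g. g \<in> G \<Longrightarrow> pfany g" "S = {x \<in> ambient I. \<forall>g\<in>G. g x = 0}"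
proof -
  from assms obtain F where F: "S = {x \<in> ambient I. \<forall>p\<in>F. mpoly_eval p x = 0}"
    unfolding zariski_closed_def by blast
  show ?thesis
    by (rule that[of "mpoly_eval ` F"]) (auto simp: F pfany_eval)
qed

lemma closed_sub_ambient: "zariski_closed I S \<Longrightarrow> S \<subseteq> ambient I"
  unfolding zariski_closed_def by blast

lemma closed_ambient: "zariski_closed I (ambient I)"
  using closed_zero_set[of "{}" I] by simp

lemma closed_Inter:
  assumes "\<And>T. T \<in> \<T> \<Longrightarrow> zariski_closed I T"
  shows "zariski_closed I (ambient I \<inter> \<Inter>\<T>)"
proof -
  define G where "G = {g. pfany g \<and> (\<forall>x\<in>\<Inter>\<T>. g x = 0)}"
  have eq: "ambient I \<inter> \<Inter>\<T> = {x \<in> ambient I. \<forall>g\<in>G. g x = 0}"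
  proof (intro equalityI subsetI)
    fix x assume x: "x \<in> ambient I \<inter> \<Inter>\<T>"
    then show "x \<in> {x \<in> ambient I. \<forall>g\<in>G. g x = 0}" unfolding G_def by blast
  next
    fix x assume x: "x \<in> {x \<in> ambient I. \<forall>g\<in>G. g x = 0}"
    have "x \<in> T" if T: "T \<in> \<T>" for T
    proof -
      obtain H where H: "\<And>g. g \<in> H \<Longrightarrow> pfany g" "T = {x \<in> ambient I. \<forall>g\<in>H. g x = 0}"
        using closed_D[OF assms[OF T]] by blast
      have "g \<in> G" if g: "g \<in> H" for g
      proof -
        have "\<forall>y\<in>\<Inter>\<T>. g y = 0"
        proof
          fix y assume "y \<in> \<Inter>\<T>"
          then have "y \<in> T" using T by blast
          then show "g y = 0" using H(2) g by blast
        qed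
        then show ?thesis unfolding G_def using H(1)[OF g] by blast
      qed
      then show ?thesis using x H(2) by blast
    qed
    then show "x \<in> ambient I \<inter> \<Inter>\<T>" using x by blast
  qed
  have "\<And>g. g \<in> G \<Longrightarrow> pfany g" unfolding G_def by blast
  from closed_zero_set[of G I, OF this] show ?thesis unfolding eq .
qed

lemma closure_closed:
  assumes "S \<subseteq> ambient I"
  shows "zariski_closed I (zariski_closure I S)"
proof -
  have "zariski_closure I S = ambient I \<inter> \<Inter>{T. zariski_closed I T \<and> S \<subseteq> T}"
  proof -
    have "\<Inter>{T. zariski_closed I T \<and> S \<subseteq> T} \<subseteq> ambient I"
      using closed_ambient[of I] assms by (intro Inter_lower) simp
    then show ?thesis unfolding zariski_closure_def by blast
  qed
  moreover have "zariski_closed I (ambient I \<inter> \<Inter>{T. zariski_closed I T \<and> S \<subseteq> T})"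
    by (rule closed_Inter) blast
  ultimately show ?thesis by simp
qed

lemma closure_sub_ambient: "S \<subseteq> ambient I \<Longrightarrow> zariski_closure I S \<subseteq> ambient I"
  using closure_closed closed_sub_ambient by blast

lemma closure_sup: "S \<subseteq> zariski_closure I S"
  unfolding zariski_closure_def by blast

lemma closure_min: "zariski_closed I T \<Longrightarrow> S \<subseteq> T \<Longrightarrow> zariski_closure I S \<subseteq> T"
  unfolding zariski_closure_def by blast

lemma closure_mono: "S \<subseteq> S' \<Longrightarrow> zariski_closure I S \<subseteq> zariski_closure I S'"
  unfolding zariski_closure_def by blast

lemma closed_inter_zero:
  assumes "zariski_closed I Y" "pfany f"
  shows "zariski_closed I {y \<in> Y. f y = 0}"
proof -
  obtain G where G: "\<And>g. g \<in> G \<Longrightarrow> pfany g" "Y = {x \<in> ambient I. \<forall>g\<in>G. g x = 0}"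
    using closed_D[OF assms(1)] by blast
  have "{y \<in> Y. f y = 0} = {x \<in> ambient I. \<forall>g\<in>insert f G. g x = 0}" using G by auto
  then show ?thesis using closed_zero_set[of "insert f G" I] G assms by auto
qed

lemma closed_preimage:
  assumes "zariski_closed I A" "\<And>x. x \<in> ambient J \<Longrightarrow> F x \<in> ambient I"
    "\<And>v. pfany (\<lambda>x. F x v)"
  shows "zariski_closed J {x \<in> ambient J. F x \<in> A}"
proof -
  obtain G where G: "\<And>g. g \<in> G \<Longrightarrow> pfany g" "A = {x \<in> ambient I. \<forall>g\<in>G. g x = 0}"
    using closed_D[OF assms(1)] by blast
  have "{x \<in> ambient J. F x \<in> A} = {x \<in> ambient J. \<forall>g\<in>(\<lambda>g x. g (F x)) ` G. g x = 0}"
    using G assms(2) by auto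
  moreover have "pfany g'" if g'in: "g' \<in> (\<lambda>g x. g (F x)) ` G" for g'
  proof -
    obtain g where g: "g \<in> G" "g' = (\<lambda>x. g (F x))" using g'in by blast
    show ?thesis unfolding g(2) by (rule pfany_comp'[OF G(1)[OF g(1)] assms(3)])
  qed
  then have "zariski_closed J {x \<in> ambient J. \<forall>g\<in>(\<lambda>g x. g (F x)) ` G. g x = 0}"
    by (rule closed_zero_set)
  ultimately show ?thesis by simp
qed

lemma irr_prod:
  assumes Y: "irreducible_closed I Y" and f: "pfany f" and g: "pfany g"
    and z: "\<And>y. y \<in> Y \<Longrightarrow> f y * g y = 0" and nz: "y0 \<in> Y" "f y0 \<noteq> 0"
  shows "\<And>y. y \<in> Y \<Longrightarrow> g y = 0"
proof -
  have cY: "zariski_closed I Y" using Y unfolding irreducible_closed_def by blast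
  have cA: "zariski_closed I {y \<in> Y. f y = 0}" by (rule closed_inter_zero[OF cY f])
  have cB: "zariski_closed I {y \<in> Y. g y = 0}" by (rule closed_inter_zero[OF cY g])
  have "Y = {y \<in> Y. f y = 0} \<union> {y \<in> Y. g y = 0}" using z by auto
  then have "Y = {y \<in> Y. f y = 0} \<or> Y = {y \<in> Y. g y = 0}"
    using Y cA cB unfolding irreducible_closed_def by blast
  moreover have "Y \<noteq> {y \<in> Y. f y = 0}" using nz by auto
  ultimately show "\<And>y. y \<in> Y \<Longrightarrow> g y = 0" by blast
qed

lemma irr_closure:
  assumes S: "S \<subseteq> ambient I" "S \<noteq> {}"
    and H: "\<And>f g. pfany f \<Longrightarrow> pfany g \<Longrightarrow> (\<exists>x\<in>S. f x \<noteq> 0) \<Longrightarrow> (\<exists>x\<in>S. g x \<noteq> 0) \<Longrightarrow>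
              \<exists>x\<in>S. f x * g x \<noteq> 0"
  shows "irreducible_closed I (zariski_closure I S)"
  unfolding irreducible_closed_def
proof (intro conjI allI impI)
  let ?W = "zariski_closure I S"
  show "zariski_closed I ?W" by (rule closure_closed[OF S(1)])
  show "?W \<noteq> {}" using S closure_sup[of S I] by auto
  fix A B assume AB: "zariski_closed I A \<and> zariski_closed I B \<and> ?W = A \<union> B"
  show "?W = A \<or> ?W = B"
  proof (rule ccontr)
    assume ne: "\<not> (?W = A \<or> ?W = B)"
    have "\<not> S \<subseteq> A"
    proof
      assume "S \<subseteq> A"
      then have "?W \<subseteq> A" using closure_min AB by blast
      then show False using ne AB by blast
    qed
    then obtain x1 where x1: "x1 \<in> S" "x1 \<notin> A" by blast
    have "\<not> S \<subseteq> B"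
    proof
      assume "S \<subseteq> B"
      then have "?W \<subseteq> B" using closure_min AB by blast
      then show False using ne AB by blast
    qed
    then obtain x2 where x2: "x2 \<in> S" "x2 \<notin> B" by blast
    obtain GA where GA: "\<And>g. g \<in> GA \<Longrightarrow> pfany g" "A = {x \<in> ambient I. \<forall>g\<in>GA. g x = 0}"
      using closed_D[of I A] AB by blast
    obtain GB where GB: "\<And>g. g \<in> GB \<Longrightarrow> pfany g" "B = {x \<in> ambient I. \<forall>g\<in>GB. g x = 0}"
      using closed_D[of I B] AB by blast
    obtain g where g: "g \<in> GA" "g x1 \<noteq> 0" using x1 GA S by auto
    obtain h where h: "h \<in> GB" "h x2 \<noteq> 0" using x2 GB S by auto
    obtain x where x: "x \<in> S" "g x * h x \<noteq> 0"
      using H[OF GA(1)[OF g(1)] GB(1)[OF h(1)]] g h x1 x2 by blast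
    have "x \<in> A \<union> B" using x closure_sup[of S I] AB by blast
    then show False
    proof
      assume "x \<in> A" then have "g x = 0" using GA g by blast
      then show False using x by simp
    next
      assume "x \<in> B" then have "h x = 0" using GB h by blast
      then show False using x by simp
    qed
  qed
qed

lemma sum_split_lt: "(\<Sum>j<(s::nat)+u. f j) = (\<Sum>j<s. f j) + (\<Sum>l<u. f (s+l)::'a::comm_monoid_add)"
  by (induction u) (simp_all add: add.assoc)

definition indep :: "('i \<Rightarrow> complex) set \<Rightarrow> (nat \<Rightarrow> ('i \<Rightarrow> complex) \<Rightarrow> complex) \<Rightarrow> nat \<Rightarrow> bool" where
  "indep Y q m \<longleftrightarrow> (\<forall>\<alpha>. (\<forall>x\<in>Y. (\<Sum>j<m. \<alpha> j * q j x) = 0) \<longrightarrow> (\<forall>j<m. \<alpha> j = 0))"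

definition fam :: "nat \<Rightarrow> ('i \<Rightarrow> complex) set \<Rightarrow> nat \<Rightarrow> bool" where
  "fam D Y m \<longleftrightarrow> (\<exists>q. (\<forall>j<m. pf D (q j)) \<and> indep Y q m)"

definition growth :: "('i \<Rightarrow> complex) set \<Rightarrow> nat \<Rightarrow> real \<Rightarrow> bool" where
  "growth Y r C \<longleftrightarrow> (\<forall>D\<ge>1. \<forall>m. fam D Y m \<longrightarrow> real m \<le> C * real D ^ r)"

lemma fam_zero: "fam D Y 0"
  unfolding fam_def indep_def by simp

lemma fam_mono: "D \<le> D' \<Longrightarrow> fam D Y m \<Longrightarrow> fam D' Y m"
  unfolding fam_def using pf_mono by blast

lemma indep_subset: "X \<subseteq> Y \<Longrightarrow> indep X q m \<Longrightarrow> indep Y q m"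
  unfolding indep_def by blast

lemma fam_subset: "X \<subseteq> Y \<Longrightarrow> fam D X m \<Longrightarrow> fam D Y m"
  unfolding fam_def using indep_subset by blast

lemma growth_subset: "X \<subseteq> Y \<Longrightarrow> growth Y r C \<Longrightarrow> growth X r C"
  unfolding growth_def using fam_subset by blast

lemma fam_one: "x \<in> X \<Longrightarrow> fam D X 1"
  unfolding fam_def indep_def
  by (rule exI[of _ "\<lambda>j x. 1"]) (auto intro: pf_const)

lemma fam_combine:
  assumes Y: "irreducible_closed I Y" and X: "zariski_closed I X" and XY: "X \<subseteq> Y" "X \<noteq> Y"
  obtains e where "\<And>D s u. fam D X s \<Longrightarrow> fam D Y u \<Longrightarrow> fam (D + e) Y (s + u)"
proof -
  have cY: "zariski_closed I Y" using Y unfolding irreducible_closed_def by blast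
  obtain y0 where y0: "y0 \<in> Y" "y0 \<notin> X" using XY by blast
  have y0a: "y0 \<in> ambient I" using closed_sub_ambient[OF cY] y0 by blast
  obtain G where G: "\<And>g. g \<in> G \<Longrightarrow> pfany g" "X = {x \<in> ambient I. \<forall>g\<in>G. g x = 0}"
    using closed_D[OF X] by blast
  obtain f where f: "f \<in> G" "f y0 \<noteq> 0" using G y0 y0a by blast
  obtain e where e: "pf e f" using pfany_pf G(1)[OF f(1)] by blast
  have fX: "\<And>x. x \<in> X \<Longrightarrow> f x = 0" using G f by blast
  have "fam (D + e) Y (s + u)" if Xs: "fam D X s" and Yu: "fam D Y u" for D s u
  proof -
    obtain q where q: "\<And>j. j < s \<Longrightarrow> pf D (q j)" "indep X q s" using Xs unfolding fam_def by blast
    obtain g where g: "\<And>j. j < u \<Longrightarrow> pf D (g j)" "indep Y g u" using Yu unfolding fam_def by blast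
    define h where "h = (\<lambda>j. if j < s then q j else (\<lambda>x. f x * g (j - s) x))"
    have pfh: "pf (D + e) (h j)" if "j < s + u" for j
    proof (cases "j < s")
      case True then show ?thesis unfolding h_def using pf_mono[OF _ q(1)[OF True], of "D+e"] by simp
    next
      case False
      then have "j - s < u" using that by simp
      from pf_mult[OF e g(1)[OF this]] show ?thesis unfolding h_def using False by (simp add: add.commute)
    qed
    have "indep Y h (s + u)"
      unfolding indep_def
    proof (rule allI, rule impI)
      fix \<alpha> assume A: "\<forall>x\<in>Y. (\<Sum>j<s + u. \<alpha> j * h j x) = 0"
      define G' where "G' = (\<lambda>x. \<Sum>l<u. \<alpha> (s + l) * g l x)"
      have split: "(\<Sum>j<s + u. \<alpha> j * h j x) = (\<Sum>j<s. \<alpha> j * q j x) + f x * G' x" for x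
        unfolding sum_split_lt G'_def h_def by (simp add: sum_distrib_left algebra_simps)
      have "\<forall>x\<in>X. (\<Sum>j<s. \<alpha> j * q j x) = 0"
        using A split fX XY(1) by force
      then have a1: "\<forall>j<s. \<alpha> j = 0" using q(2) unfolding indep_def by blast
      then have "(\<Sum>j<s. \<alpha> j * q j x) = 0" for x by simp
      then have fG: "\<And>x. x \<in> Y \<Longrightarrow> f x * G' x = 0" using A split by simp
      have "pf D G'" unfolding G'_def by (intro pf_sum pf_scale g(1)) auto
      then have "pfany G'" by (rule pf_pfany)
      from irr_prod[OF Y G(1)[OF f(1)] this fG y0(1) f(2)]
      have "\<forall>x\<in>Y. (\<Sum>l<u. \<alpha> (s + l) * g l x) = 0" unfolding G'_def by blast
      then have a2: "\<forall>l<u. \<alpha> (s + l) = 0" using g(2)[unfolded indep_def, THEN spec, of "\<lambda>l. \<alpha> (s + l)"] by blast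
      show "\<forall>j<s + u. \<alpha> j = 0"
      proof (intro allI impI)
        fix j assume "j < s + u"
        show "\<alpha> j = 0"
        proof (cases "j < s")
          case True then show ?thesis using a1 by blast
        next
          case False then show ?thesis using a2[rule_format, of "j - s"] \<open>j < s + u\<close> by simp
        qed
      qed
    qed
    then show ?thesis unfolding fam_def using pfh by blast
  qed
  then show ?thesis using that by blast
qed

lemma fam_iter:
  assumes comb: "\<And>D s u. fam D X s \<Longrightarrow> fam D Y u \<Longrightarrow> fam (D + e) Y (s + u)"
    and Xs: "fam E X s"
  shows "fam (E + j * e) Y (j * s)"
proof (induction j)
  case 0 then show ?case using fam_zero by simp
next
  case (Suc j)
  have "fam (E + j * e) X s" using fam_mono[OF _ Xs] by simp
  from comb[OF this Suc.IH] show ?case by (simp add: algebra_simps)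
qed

lemma growth_step:
  assumes Y: "irreducible_closed I Y" and X: "zariski_closed I X" and XY: "X \<subseteq> Y" "X \<noteq> Y"
    and gY: "growth Y (Suc r) C"
  shows "\<exists>C'. growth X r C'"
proof -
  obtain e where comb: "\<And>D s u. fam D X s \<Longrightarrow> fam D Y u \<Longrightarrow> fam (D + e) Y (s + u)"
    using fam_combine[OF Y X XY] by blast
  have "growth X r (C * (1 + real e) ^ Suc r)"
    unfolding growth_def
  proof (intro allI impI)
    fix D m assume D: "1 \<le> D" and Xm: "fam D X m"
    have "fam (D + D * e) Y (D * m)" by (rule fam_iter[OF comb Xm])
    moreover have "1 \<le> D + D * e" using D by simp
    ultimately have "real (D * m) \<le> C * real (D + D * e) ^ Suc r" using gY unfolding growth_def by blast
    also have "real (D + D * e) = real D * (1 + real e)" by (simp add: algebra_simps)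
    also have "C * (real D * (1 + real e)) ^ Suc r = real D * (C * (1 + real e) ^ Suc r * real D ^ r)"
      by (simp only: power_mult_distrib power_Suc mult_ac)
    finally have "real D * real m \<le> real D * (C * (1 + real e) ^ Suc r * real D ^ r)"
      by simp
    then show "real m \<le> C * (1 + real e) ^ Suc r * real D ^ r"
      using D by (simp add: mult_le_cancel_left)
  qed
  then show ?thesis by blast
qed

lemma growth_base:
  assumes Y: "irreducible_closed I Y" and X: "zariski_closed I X" and XY: "X \<subseteq> Y" "X \<noteq> Y"
    and gY: "growth Y 0 C"
  shows "X = {}"
proof (rule ccontr)
  assume "X \<noteq> {}"
  then obtain x where x: "x \<in> X" by blast
  obtain e where comb: "\<And>D s u. fam D X s \<Longrightarrow> fam D Y u \<Longrightarrow> fam (D + e) Y (s + u)"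
    using fam_combine[OF Y X XY] by blast
  define D where "D = nat \<lceil>C\<rceil> + 1"
  have "fam (D + D * e) Y (D * 1)" by (rule fam_iter[OF comb fam_one[OF x]])
  then have "real D \<le> C" using gY unfolding growth_def D_def by force
  then show False unfolding D_def by linarith
qed

lemma chain_bound:
  assumes ch: "\<forall>j\<le>k. irreducible_closed I (C j) \<and> C j \<subseteq> V" and st: "\<forall>j<k. C j \<subset> C (Suc j)"
    and gV: "growth V r K"
  shows "k \<le> r"
proof (rule ccontr)
  assume kr: "\<not> k \<le> r"
  have irr: "\<And>j. j \<le> k \<Longrightarrow> irreducible_closed I (C j)" using ch by blast
  have cl: "\<And>j. j \<le> k \<Longrightarrow> zariski_closed I (C j)" using irr unfolding irreducible_closed_def by blast
  have G: "i \<le> r \<Longrightarrow> \<exists>K'. growth (C (k - i)) (r - i) K'" for i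
  proof (induction i)
    case 0
    then show ?case using growth_subset[of "C k" V r K] ch gV by auto
  next
    case (Suc i)
    have ir: "i \<le> r" using Suc.prems by simp
    then obtain K0 where K0: "growth (C (k - i)) (r - i) K0" using Suc.IH by blast
    have ri: "r - i = Suc (r - Suc i)" using Suc.prems by simp
    have kk: "k - i = Suc (k - Suc i)" using Suc.prems kr by simp
    have lt: "k - Suc i < k" using Suc.prems kr by simp
    have "C (k - Suc i) \<subset> C (Suc (k - Suc i))" using st lt by blast
    then have sub: "C (k - Suc i) \<subset> C (k - i)" using kk by simp
    have K': "growth (C (k - i)) (Suc (r - Suc i)) K0" using K0 ri by simp
    have "k - i \<le> k" by simp
    from growth_step[OF irr[OF this] cl[of "k - Suc i"] _ _ K'] sub
    show ?case by auto
  qed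
  obtain K' where K': "growth (C (k - r)) 0 K'" using G[of r] by auto
  have kk: "k - r = Suc (k - Suc r)" using kr by simp
  have lt: "k - Suc r < k" using kr by simp
  have "C (k - Suc r) \<subset> C (Suc (k - Suc r))" using st lt by blast
  then have sub: "C (k - Suc r) \<subset> C (k - r)" using kk by simp
  have "k - r \<le> k" "k - Suc r \<le> k" by simp_all
  from growth_base[OF irr[OF this(1)] cl[OF this(2)] _ _ K'] sub
  have "C (k - Suc r) = {}" by auto
  then show False using irr[of "k - Suc r"] unfolding irreducible_closed_def by auto
qed

abbreviation NN :: "nat \<Rightarrow> nat list set" where
  "NN n \<equiv> N_lambda n (staircase n)"

lemma N_char: "NN n = permutations_of_set {..<n}"
proof (intro equalityI subsetI)
  fix xs assume "xs \<in> NN n"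
  then have len: "length xs = n" and ms: "mset (filter (\<lambda>i. i \<noteq> 0) xs) = mset [1..<n]"
    unfolding N_lambda_def staircase_def by auto
  have "length (filter (\<lambda>i. i \<noteq> 0) xs) = n - 1"
  proof -
    have "size (mset (filter (\<lambda>i. i \<noteq> 0) xs)) = size (mset [1..<n])" using ms by (rule arg_cong)
    then show ?thesis by (simp only: size_mset length_upt)
  qed
  moreover have "length (filter (\<lambda>i. i \<noteq> 0) xs) + length (filter (\<lambda>i. \<not> i \<noteq> 0) xs) = n"
    using sum_length_filter_compl len by blast
  ultimately have l0: "length (filter (\<lambda>i. i = 0) xs) = n - (n - 1)" by simp
  show "xs \<in> permutations_of_set {..<n}"
  proof (cases "n = 0")
    case True then have "xs = []" using len by simp
    then show ?thesis using True by simp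
  next
    case False
    then have "n \<noteq> 0" by simp
  then have "length (filter (\<lambda>i. i = 0) xs) = 1" using l0 by simp
  then obtain a where a: "filter (\<lambda>i. i = 0) xs = [a]"
    by (auto simp: length_Suc_conv)
  moreover have "a \<in> set (filter (\<lambda>i. i = 0) xs)" using a by simp
  then have "a = 0" by simp
  ultimately have f0: "filter (\<lambda>i. i = 0) xs = [0]" by simp
  have "mset xs = mset (filter (\<lambda>i. i \<noteq> 0) xs) + mset (filter (\<lambda>i. \<not> i \<noteq> 0) xs)"
    by (simp add: multiset_partition[symmetric])
  also have "\<dots> = mset [1..<n] + mset [0]" using ms f0 by simp
  also have "\<dots> = mset [0..<n]" using \<open>n \<noteq> 0\<close> by (simp add: upt_conv_Cons)
  finally have me: "mset xs = mset [0..<n]" .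
  have "distinct xs" using mset_eq_imp_distinct_iff[OF me] by simp
  moreover have "set xs = {..<n}" using mset_eq_setD[OF me] by (simp add: atLeast0LessThan)
  ultimately show "xs \<in> permutations_of_set {..<n}" by auto
  qed
next
  fix xs assume "xs \<in> permutations_of_set {..<n}"
  then have d: "distinct xs" and s: "set xs = {..<n}" by (auto dest: permutations_of_setD)
  have len: "length xs = n" using distinct_card[OF d] s by simp
  have d2: "distinct (filter (\<lambda>i. i \<noteq> 0) xs)" using d by simp
  have "set (filter (\<lambda>i. i \<noteq> 0) xs) = {x \<in> {..<n}. x \<noteq> 0}" unfolding set_filter s ..
  also have "\<dots> = set [1..<n]" by auto
  finally have s2: "set (filter (\<lambda>i. i \<noteq> 0) xs) = set [1..<n]" .
  have d3: "distinct [1..<n]" by simp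
  have "mset (filter (\<lambda>i. i \<noteq> 0) xs) = mset [1..<n]"
    using set_eq_iff_mset_eq_distinct[OF d2 d3] s2 by blast
  then show "xs \<in> NN n" unfolding N_lambda_def staircase_def using len by simp
qed

lemma NN_D: assumes "v \<in> NN n" shows "length v = n" "distinct v" "set v = {..<n}"
  using assms N_char[of n] length_finite_permutations_of_set[of v "{..<n}"]
  by (auto dest: permutations_of_setD)

lemma NN_nth_lt: "v \<in> NN n \<Longrightarrow> k < n \<Longrightarrow> v ! k < n"
  using NN_D[of v n] by (metis lessThan_iff nth_mem)

lemma NN_unique: "v \<in> NN n \<Longrightarrow> k < n \<Longrightarrow> k' < n \<Longrightarrow> v ! k = v ! k' \<Longrightarrow> k = k'"
  using NN_D[of v n] nth_eq_iff_index_eq by metis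

lemma NN_exists: "v \<in> NN n \<Longrightarrow> b < n \<Longrightarrow> \<exists>k<n. v ! k = b"
  using NN_D[of v n] by (metis in_set_conv_nth lessThan_iff)

lemma NN_map: assumes "f ` {..<n} \<subseteq> {..<n}" "inj_on f {..<n}" shows "map f [0..<n] \<in> NN n"
proof -
  have "f ` {..<n} = {..<n}"
    using assms by (simp add: endo_inj_surj)
  then have "set (map f [0..<n]) = {..<n}" by (simp add: atLeast0LessThan)
  moreover have "distinct (map f [0..<n])" using assms(2) by (simp add: distinct_map atLeast0LessThan)
  ultimately show ?thesis unfolding N_char by auto
qed

lemma card_NN: "card (NN n) = fact n"
  unfolding N_char by simp

lemma finite_NN: "finite (NN n)"
  unfolding N_char by simp

lemma ident_perm:
  assumes v: "v \<in> NN n"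
  shows "(\<lambda>a. if a < n then v ! a else a) permutes {..<n}"
    "ident_matrix n v = perm_matrix n (\<lambda>a. if a < n then v ! a else a)"
proof -
  let ?s = "\<lambda>a. if a < n then v ! a else a"
  have "inj_on ?s {..<n}" using NN_unique[OF v] by (auto simp: inj_on_def)
  moreover have "?s ` {..<n} = {..<n}"
  proof -
    have "?s ` {..<n} = (\<lambda>a. v ! a) ` {..<length v}" using NN_D[OF v] by auto
    also have "\<dots> = set v" by (force simp: set_conv_nth)
    finally show ?thesis using NN_D[OF v] by simp
  qed
  ultimately have "bij_betw ?s {..<n} {..<n}" unfolding bij_betw_def by simp
  then show "?s permutes {..<n}" by (rule bij_imp_permutes) simp
  show "ident_matrix n v = perm_matrix n ?s"
    unfolding ident_matrix_def perm_matrix_def by (auto simp: fun_eq_iff)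
qed

lemma bij_ident: "bij_betw (ident_matrix n) (NN n) (perm_matrices n)"
  unfolding bij_betw_def
proof (intro conjI)
  show "inj_on (ident_matrix n) (NN n)"
  proof (rule inj_onI)
    fix v w assume v: "v \<in> NN n" and w: "w \<in> NN n" and eq: "ident_matrix n v = ident_matrix n w"
    have "v ! a = w ! a" if a: "a < n" for a
    proof -
      have "ident_matrix n v (a, v ! a) = 1" using NN_nth_lt[OF v a] a unfolding ident_matrix_def by simp
      then have "ident_matrix n w (a, v ! a) = 1" using eq by simp
      then show ?thesis unfolding ident_matrix_def by (auto split: if_splits)
    qed
    then show "v = w" using NN_D[OF v] NN_D[OF w] by (auto intro: nth_equalityI)
  qed
  show "ident_matrix n ` NN n = perm_matrices n"
  proof (intro equalityI subsetI)
    fix P assume "P \<in> ident_matrix n ` NN n"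
    then obtain v where v: "v \<in> NN n" "P = ident_matrix n v" by blast
    then show "P \<in> perm_matrices n" unfolding perm_matrices_def using ident_perm[OF v(1)] by blast
  next
    fix P assume "P \<in> perm_matrices n"
    then obtain \<sigma> where s: "\<sigma> permutes {..<n}" "P = perm_matrix n \<sigma>" unfolding perm_matrices_def by blast
    have "\<sigma> ` {..<n} \<subseteq> {..<n}" using permutes_image[OF s(1)] by simp
    moreover have "inj_on \<sigma> {..<n}" using permutes_inj_on[OF s(1)] .
    ultimately have m: "map \<sigma> [0..<n] \<in> NN n" by (rule NN_map)
    have "ident_matrix n (map \<sigma> [0..<n]) = P"
      unfolding s(2) ident_matrix_def perm_matrix_def by (auto simp: fun_eq_iff)
    then show "P \<in> ident_matrix n ` NN n" using m by blast
  qed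
qed

definition UP :: "(complex \<Rightarrow> complex) set" where
  "UP = {f. \<exists>P. \<forall>s. f s = poly P s}"

lemma UP_const: "(\<lambda>s. c) \<in> UP"
  unfolding UP_def by (rule CollectI, rule exI[of _ "[:c:]"]) simp

lemma UP_id: "(\<lambda>s. s) \<in> UP"
  unfolding UP_def by (rule CollectI, rule exI[of _ "[:0, 1:]"]) simp

lemma UP_add: "f \<in> UP \<Longrightarrow> g \<in> UP \<Longrightarrow> (\<lambda>s. f s + g s) \<in> UP"
proof -
  assume "f \<in> UP" "g \<in> UP"
  then obtain P Q where "\<And>s. f s = poly P s" "\<And>s. g s = poly Q s" unfolding UP_def by blast
  then show ?thesis unfolding UP_def by (intro CollectI exI[of _ "P + Q"]) (simp add: poly_add)
qed

lemma UP_mult: "f \<in> UP \<Longrightarrow> g \<in> UP \<Longrightarrow> (\<lambda>s. f s * g s) \<in> UP"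
proof -
  assume "f \<in> UP" "g \<in> UP"
  then obtain P Q where "\<And>s. f s = poly P s" "\<And>s. g s = poly Q s" unfolding UP_def by blast
  then show ?thesis unfolding UP_def by (intro CollectI exI[of _ "P * Q"]) (simp add: poly_mult)
qed

lemma UP_prod: "finite A \<Longrightarrow> (\<And>a. a \<in> A \<Longrightarrow> f a \<in> UP) \<Longrightarrow> (\<lambda>z. \<Prod>a\<in>A. f a z) \<in> UP"
  by (rule K_prod[of UP, OF UP_mult UP_const])

lemma UP_comp: "(\<And>v. (\<lambda>s. F s v) \<in> UP) \<Longrightarrow> (\<lambda>s. mpoly_eval p (F s)) \<in> UP"
  by (rule eval_comp_closed[OF UP_const UP_add UP_mult])

lemma UP_comp': "pfany g \<Longrightarrow> (\<And>v. (\<lambda>s. F s v) \<in> UP) \<Longrightarrow> (\<lambda>s. g (F s)) \<in> UP"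
  unfolding pfany_def using UP_comp by blast

lemma UP_cofinite_zero:
  assumes f: "f \<in> UP" and E: "finite E" and z: "\<And>s. s \<notin> E \<Longrightarrow> f s = 0"
  shows "f s0 = 0"
proof -
  obtain P where P: "\<And>s. f s = poly P s" using f unfolding UP_def by blast
  show ?thesis
  proof (cases "P = 0")
    case True then show ?thesis using P by simp
  next
    case False
    have "UNIV - E \<subseteq> {x. poly P x = 0}" using z P by auto
    then have "finite (UNIV - E)" using poly_roots_finite[OF False] finite_subset by blast
    then have "finite (UNIV :: complex set)" using E by (metis Diff_empty finite_Diff2)
    then show ?thesis using infinite_UNIV_char_0 by blast
  qed
qed

lemma UP_prod_nz:
  assumes f: "f \<in> UP" and g: "g \<in> UP" and a: "f a \<noteq> 0" and b: "g b \<noteq> 0"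
  shows "\<exists>s. f s * g s \<noteq> 0"
proof (rule ccontr)
  assume "\<not> (\<exists>s. f s * g s \<noteq> 0)"
  then have z: "\<And>s. f s * g s = 0" by blast
  have "(\<lambda>s. f s * g s) \<in> UP" by (rule UP_mult[OF f g])
  obtain P where P: "\<And>s. f s = poly P s" using f unfolding UP_def by blast
  have "P \<noteq> 0" using a P by auto
  then have fin: "finite {x. f x = 0}" using poly_roots_finite[of P] P by simp
  have "g s = 0" if "s \<notin> {x. f x = 0}" for s using z[of s] that by simp
  from UP_cofinite_zero[OF g fin this] b show False by blast
qed

subsection \<open>Parametrizations\<close>

definition Phi :: "nat \<Rightarrow> complex \<Rightarrow> (nat \<Rightarrow> nat \<Rightarrow> complex) \<Rightarrow> nat list \<Rightarrow> complex" where
  "Phi n c mu = (\<lambda>is. if is \<in> NN n then c * moment_coord n mu is else 0)"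

definition Psi :: "nat \<Rightarrow> complex \<Rightarrow> (nat \<Rightarrow> nat \<Rightarrow> complex) \<Rightarrow> nat list \<Rightarrow> complex" where
  "Psi n c t = (\<lambda>is. if is \<in> NN n then c * (\<Prod>k<n. t k (is ! k)) else 0)"

definition SPhi :: "nat \<Rightarrow> (nat list \<Rightarrow> complex) set" where
  "SPhi n = {Phi n c mu | c mu. True}"

definition SPsi :: "nat \<Rightarrow> (nat list \<Rightarrow> complex) set" where
  "SPsi n = {Psi n c t | c t. True}"

lemma MV_def': "moment_variety n (staircase n) = zariski_closure (NN n) (SPhi n)"
  unfolding moment_variety_def proj_closure_cone_def SPhi_def Phi_def by simp

lemma SPhi_amb: "SPhi n \<subseteq> ambient (NN n)"
  unfolding SPhi_def Phi_def ambient_def by auto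

lemma SPsi_amb: "SPsi n \<subseteq> ambient (NN n)"
  unfolding SPsi_def Psi_def ambient_def by auto

lemma Psi_amb: "Psi n c t \<in> ambient (NN n)"
  unfolding Psi_def ambient_def by auto

lemma SPhi_sub: "SPhi n \<subseteq> SPsi n"
proof
  fix x assume "x \<in> SPhi n"
  then obtain c mu where x: "x = Phi n c mu" unfolding SPhi_def by blast
  have "x = Psi n c (\<lambda>k b. if b = 0 then 1 else mu k b)"
    unfolding x Phi_def Psi_def moment_coord_def by (simp add: fun_eq_iff)
  then show "x \<in> SPsi n" unfolding SPsi_def by blast
qed

lemma Psi_in_SPhi:
  assumes nz: "\<And>k. k < n \<Longrightarrow> t k 0 \<noteq> 0"
  shows "Psi n c t \<in> SPhi n"
proof -
  define mu where "mu = (\<lambda>k b. t k b / t k 0)"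
  have "(\<Prod>k<n. t k (is ! k)) = (\<Prod>k<n. t k 0) * moment_coord n mu is" for "is"
  proof -
    have "(\<Prod>k<n. t k (is ! k)) = (\<Prod>k<n. t k 0 * (if is ! k = 0 then 1 else mu k (is ! k)))"
      by (rule prod.cong) (auto simp: mu_def nz)
    then show ?thesis unfolding moment_coord_def by (simp add: prod.distrib)
  qed
  then have "Psi n c t = Phi n (c * (\<Prod>k<n. t k 0)) mu"
    unfolding Psi_def Phi_def by (simp add: fun_eq_iff mult.assoc)
  then show ?thesis unfolding SPhi_def by blast
qed

lemma closure_memI:
  assumes "\<And>T. zariski_closed I T \<Longrightarrow> S \<subseteq> T \<Longrightarrow> x \<in> T"
  shows "x \<in> zariski_closure I S"
  using assms unfolding zariski_closure_def by blast

lemma SPsi_sub_closure: "SPsi n \<subseteq> zariski_closure (NN n) (SPhi n)"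
proof
  fix x assume "x \<in> SPsi n"
  then obtain c t where x: "x = Psi n c t" unfolding SPsi_def by blast
  show "x \<in> zariski_closure (NN n) (SPhi n)"
  proof (rule closure_memI)
    fix T assume T: "zariski_closed (NN n) T" "SPhi n \<subseteq> T"
    obtain G where G: "\<And>g. g \<in> G \<Longrightarrow> pfany g" "T = {x \<in> ambient (NN n). \<forall>g\<in>G. g x = 0}"
      using closed_D[OF T(1)] by blast
    define ts where "ts = (\<lambda>s k b. if b = 0 then t k 0 + s * (1 - t k 0) else t k b)"
    define E where "E = (\<Union>k<n. {s. t k 0 + s * (1 - t k 0) = 0})"
    have finE: "finite E"
      unfolding E_def
    proof (rule finite_UN_I)
      fix k
      have "{s. t k 0 + s * (1 - t k 0) = 0} \<subseteq> {- t k 0 / (1 - t k 0)}"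
      proof
        fix s assume "s \<in> {s. t k 0 + s * (1 - t k 0) = 0}"
        then have e: "t k 0 + s * (1 - t k 0) = 0" by simp
        then have "1 - t k 0 \<noteq> 0" by auto
        with e show "s \<in> {- t k 0 / (1 - t k 0)}" by (simp add: field_simps)
      qed
      then show "finite {s. t k 0 + s * (1 - t k 0) = 0}" using finite_subset by blast
    qed simp
    have t0: "ts 0 = t" unfolding ts_def by (simp add: fun_eq_iff)
    have "g x = 0" if g: "g \<in> G" for g
    proof -
      have UPc: "(\<lambda>s. Psi n c (ts s) v) \<in> UP" for v
      proof (cases "v \<in> NN n")
        case True
        have "(\<lambda>s. ts s k b) \<in> UP" for k b
          unfolding ts_def by (cases "b = 0") (simp_all add: UP_const UP_add UP_mult UP_id)
        then have "(\<lambda>s. c * (\<Prod>k<n. ts s k (v ! k))) \<in> UP"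
          by (intro UP_mult UP_const UP_prod) auto
        then show ?thesis unfolding Psi_def using True by simp
      next
        case False then show ?thesis unfolding Psi_def using UP_const by simp
      qed
      have h: "(\<lambda>s. g (Psi n c (ts s))) \<in> UP" by (rule UP_comp'[OF G(1)[OF g] UPc])
      have "g (Psi n c (ts s)) = 0" if s: "s \<notin> E" for s
      proof -
        have "ts s k 0 \<noteq> 0" if "k < n" for k using s that unfolding E_def ts_def by auto
        then have "Psi n c (ts s) \<in> T" using Psi_in_SPhi T(2) by blast
        then show ?thesis using G g by blast
      qed
      from UP_cofinite_zero[OF h finE this, of 0] show ?thesis using t0 x by simp
    qed
    then show "x \<in> T" using G(2) x Psi_amb by blast
  qed
qed

lemma closure_eq:
  assumes "S1 \<subseteq> S2" "S2 \<subseteq> zariski_closure I S1" "S1 \<subseteq> ambient I"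
  shows "zariski_closure I S1 = zariski_closure I S2"
proof
  show "zariski_closure I S1 \<subseteq> zariski_closure I S2" by (rule closure_mono[OF assms(1)])
  show "zariski_closure I S2 \<subseteq> zariski_closure I S1"
    by (rule closure_min[OF closure_closed[OF assms(3)] assms(2)])
qed

lemma MV_Psi: "moment_variety n (staircase n) = zariski_closure (NN n) (SPsi n)"
  unfolding MV_def' by (rule closure_eq[OF SPhi_sub SPsi_sub_closure SPhi_amb])

subsection \<open>Relabelling\<close>

lemma closure_image_transfer:
  assumes S: "S \<subseteq> ambient J"
    and Ramb: "\<And>x. x \<in> ambient J \<Longrightarrow> R x \<in> ambient I"
    and R'amb: "\<And>y. y \<in> ambient I \<Longrightarrow> R' y \<in> ambient J"
    and inv2: "\<And>y. y \<in> ambient I \<Longrightarrow> R (R' y) = y"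
    and inv1: "\<And>x. x \<in> ambient J \<Longrightarrow> R' (R x) = x"
    and pfR: "\<And>v. pfany (\<lambda>x. R x v)" and pfR': "\<And>v. pfany (\<lambda>y. R' y v)"
  shows "R ` zariski_closure J S = zariski_closure I (R ` S)"
proof (intro equalityI subsetI)
  fix y assume "y \<in> R ` zariski_closure J S"
  then obtain x where x: "x \<in> zariski_closure J S" "y = R x" by blast
  show "y \<in> zariski_closure I (R ` S)"
  proof (rule closure_memI)
    fix A assume A: "zariski_closed I A" "R ` S \<subseteq> A"
    have cT: "zariski_closed J {x \<in> ambient J. R x \<in> A}"
      by (rule closed_preimage[OF A(1) Ramb pfR])
    have "S \<subseteq> {x \<in> ambient J. R x \<in> A}" using S A(2) by blast
    then have "zariski_closure J S \<subseteq> {x \<in> ambient J. R x \<in> A}" by (rule closure_min[OF cT])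
    then show "y \<in> A" using x by blast
  qed
next
  fix y assume y: "y \<in> zariski_closure I (R ` S)"
  have RS: "R ` S \<subseteq> ambient I" using S Ramb by blast
  have ya: "y \<in> ambient I" using closure_sub_ambient[OF RS] y by blast
  have "R' y \<in> zariski_closure J S"
  proof (rule closure_memI)
    fix T assume T: "zariski_closed J T" "S \<subseteq> T"
    have cA: "zariski_closed I {y \<in> ambient I. R' y \<in> T}"
      by (rule closed_preimage[OF T(1) R'amb pfR'])
    have "R ` S \<subseteq> {y \<in> ambient I. R' y \<in> T}"
    proof
      fix y assume "y \<in> R ` S"
      then obtain s where s: "s \<in> S" "y = R s" by blast
      then have sa: "s \<in> ambient J" using S by blast
      show "y \<in> {y \<in> ambient I. R' y \<in> T}" using s sa Ramb[OF sa] inv1[OF sa] T(2) by auto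
    qed
    then have "zariski_closure I (R ` S) \<subseteq> {y \<in> ambient I. R' y \<in> T}" by (rule closure_min[OF cA])
    then show "R' y \<in> T" using y by blast
  qed
  then show "y \<in> R ` zariski_closure J S" using inv2[OF ya] by (metis image_eqI)
qed

definition Rl :: "nat \<Rightarrow> ((nat \<times> nat \<Rightarrow> nat) \<Rightarrow> complex) \<Rightarrow> nat list \<Rightarrow> complex" where
  "Rl n = (\<lambda>z. \<lambda>is. if is \<in> NN n then z (ident_matrix n is) else 0)"

definition Rl' :: "nat \<Rightarrow> (nat list \<Rightarrow> complex) \<Rightarrow> (nat \<times> nat \<Rightarrow> nat) \<Rightarrow> complex" where
  "Rl' n = (\<lambda>y. \<lambda>P. if P \<in> perm_matrices n then y (inv_into (NN n) (ident_matrix n) P) else 0)"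

definition SB :: "nat \<Rightarrow> ((nat \<times> nat \<Rightarrow> nat) \<Rightarrow> complex) set" where
  "SB n = {(\<lambda>P. if P \<in> perm_matrices n then c * toric_coord n t P else 0) | c t. True}"

lemma toric_ident:
  assumes v: "v \<in> NN n"
  shows "toric_coord n t (ident_matrix n v) = (\<Prod>k<n. t (k, v ! k))"
proof -
  have "toric_coord n t (ident_matrix n v) = (\<Prod>a<n. \<Prod>b<n. t (a, b) ^ ident_matrix n v (a, b))"
    unfolding toric_coord_def by (simp add: prod.cartesian_product)
  also have "\<dots> = (\<Prod>a<n. \<Prod>b<n. if b = v ! a then t (a, b) else 1)"
    by (rule prod.cong[OF refl], rule prod.cong[OF refl]) (auto simp: ident_matrix_def)
  also have "\<dots> = (\<Prod>a<n. t (a, v ! a))"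
    by (rule prod.cong[OF refl]) (simp add: prod.delta' NN_nth_lt[OF v])
  finally show ?thesis .
qed

lemma Rl_SB: "Rl n ` SB n = SPsi n"
proof (intro equalityI subsetI)
  fix y assume "y \<in> Rl n ` SB n"
  then obtain c t where y: "y = Rl n (\<lambda>P. if P \<in> perm_matrices n then c * toric_coord n t P else 0)"
    unfolding SB_def by blast
  have "y = Psi n c (\<lambda>k b. t (k, b))"
    unfolding y Rl_def Psi_def
    using bij_betw_apply[OF bij_ident[of n]] toric_ident by (auto simp: fun_eq_iff)
  then show "y \<in> SPsi n" unfolding SPsi_def by blast
next
  fix y assume "y \<in> SPsi n"
  then obtain c t where y: "y = Psi n c t" unfolding SPsi_def by blast
  have "y = Rl n (\<lambda>P. if P \<in> perm_matrices n then c * toric_coord n (\<lambda>(k, b). t k b) P else 0)"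
    unfolding y Rl_def Psi_def
    using bij_betw_apply[OF bij_ident[of n]] toric_ident by (auto simp: fun_eq_iff)
  then show "y \<in> Rl n ` SB n" unfolding SB_def by blast
qed

lemma MV_eq: "moment_variety n (staircase n) = Rl n ` birkhoff_toric_variety n"
proof -
  have bij: "bij_betw (ident_matrix n) (NN n) (perm_matrices n)" by (rule bij_ident)
  have "Rl n ` zariski_closure (perm_matrices n) (SB n) = zariski_closure (NN n) (Rl n ` SB n)"
  proof (rule closure_image_transfer)
    show "SB n \<subseteq> ambient (perm_matrices n)" unfolding SB_def ambient_def by auto
    show "\<And>x. x \<in> ambient (perm_matrices n) \<Longrightarrow> Rl n x \<in> ambient (NN n)"
      unfolding Rl_def ambient_def by auto
    show "\<And>y. y \<in> ambient (NN n) \<Longrightarrow> Rl' n y \<in> ambient (perm_matrices n)"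
      unfolding Rl'_def ambient_def by auto
    show "Rl n (Rl' n y) = y" if "y \<in> ambient (NN n)" for y
      using that bij_betw_apply[OF bij] bij_betw_imp_inj_on[OF bij]
      unfolding Rl_def Rl'_def ambient_def by (auto simp: fun_eq_iff)
    show "Rl' n (Rl n x) = x" if "x \<in> ambient (perm_matrices n)" for x
    proof -
      have "Rl' n (Rl n x) P = x P" for P
      proof (cases "P \<in> perm_matrices n")
        case True
        have "P \<in> ident_matrix n ` NN n" using True bij_betw_imp_surj_on[OF bij] by simp
        then have "inv_into (NN n) (ident_matrix n) P \<in> NN n"
          "ident_matrix n (inv_into (NN n) (ident_matrix n) P) = P"
          by (auto intro: inv_into_into f_inv_into_f)
        then show ?thesis unfolding Rl_def Rl'_def using True by simp
      next
        case False then show ?thesis using that unfolding Rl'_def ambient_def by simp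
      qed
      then show ?thesis by (simp add: fun_eq_iff)
    qed
    show "pfany (\<lambda>x. Rl n x v)" for v
      unfolding Rl_def by (cases "v \<in> NN n") (simp_all add: pfany_var pfany_const)
    show "pfany (\<lambda>y. Rl' n y v)" for v
      unfolding Rl'_def by (cases "v \<in> perm_matrices n") (simp_all add: pfany_var pfany_const)
  qed
  then show ?thesis
    unfolding MV_Psi birkhoff_toric_variety_def proj_closure_cone_def Rl_SB[symmetric] SB_def
    by simp
qed

lemma sum_fun_apply': "(sum F A) z = (\<Sum>i\<in>A. F i z)"
  by (induction A rule: infinite_finite_induct) auto

definition fscale :: "complex \<Rightarrow> ('a \<Rightarrow> complex) \<Rightarrow> 'a \<Rightarrow> complex" where
  "fscale c f = (\<lambda>z. c * f z)"

interpretation fvs: vector_space "fscale :: complex \<Rightarrow> ('a \<Rightarrow> complex) \<Rightarrow> 'a \<Rightarrow> complex"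
  by unfold_locales (auto simp: fscale_def fun_eq_iff algebra_simps)

lemma fam_span_bound:
  fixes f :: "nat \<Rightarrow> 'a \<Rightarrow> complex" and B :: "('a \<Rightarrow> complex) set"
  assumes B: "finite B" and sp: "\<And>j. j < m \<Longrightarrow> f j \<in> fvs.span B"
    and ind: "\<And>\<alpha>. (\<And>z. (\<Sum>j<m. \<alpha> j * f j z) = 0) \<Longrightarrow> (\<forall>j<m. \<alpha> j = 0)"
  shows "m \<le> card B"
proof -
  have inj: "inj_on f {..<m}"
  proof (rule inj_onI, rule ccontr)
    fix i j assume i: "i \<in> {..<m}" and j: "j \<in> {..<m}" and eq: "f i = f j" and ne: "i \<noteq> j"
    define \<alpha> where "\<alpha> = (\<lambda>l. if l = i then (1::complex) else if l = j then -1 else 0)"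
    have "(\<Sum>l<m. \<alpha> l * f l z) = 0" for z
    proof -
      have "(\<Sum>l<m. \<alpha> l * f l z) = (\<Sum>l\<in>{i, j}. \<alpha> l * f l z)"
        by (rule sum.mono_neutral_right) (use i j in \<open>auto simp: \<alpha>_def\<close>)
      also have "\<dots> = 0" using ne eq by (simp add: \<alpha>_def)
      finally show ?thesis .
    qed
    then have "\<alpha> i = 0" using ind i by blast
    then show False by (simp add: \<alpha>_def)
  qed
  have indep: "fvs.independent (f ` {..<m})"
  proof
    assume "fvs.dependent (f ` {..<m})"
    then obtain t u where t: "finite t" "t \<subseteq> f ` {..<m}" "(\<Sum>v\<in>t. fscale (u v) v) = 0" "\<exists>v\<in>t. u v \<noteq> 0"
      unfolding fvs.dependent_explicit by blast
    define \<alpha> where "\<alpha> = (\<lambda>j. if f j \<in> t then u (f j) else 0)"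
    have "(\<Sum>j<m. \<alpha> j * f j z) = 0" for z
    proof -
      have "(\<Sum>j<m. \<alpha> j * f j z) = (\<Sum>j\<in>{j. j < m \<and> f j \<in> t}. u (f j) * f j z)"
        by (rule sum.mono_neutral_cong_right) (auto simp: \<alpha>_def)
      also have "\<dots> = (\<Sum>v\<in>f ` {j. j < m \<and> f j \<in> t}. u v * v z)"
        by (rule sum.reindex[symmetric, unfolded comp_def]) (rule inj_on_subset[OF inj], auto)
      also have "f ` {j. j < m \<and> f j \<in> t} = t" using t(2) by auto
      also have "(\<Sum>v\<in>t. u v * v z) = (\<Sum>v\<in>t. fscale (u v) v) z"
        by (simp add: sum_fun_apply' fscale_def)
      also have "\<dots> = 0" using t(3) by simp
      finally show ?thesis .
    qed
    then have a0: "\<forall>j<m. \<alpha> j = 0" using ind by blast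
    obtain v where v: "v \<in> t" "u v \<noteq> 0" using t(4) by blast
    then obtain j where "j < m" "v = f j" using t(2) by blast
    then show False using a0 v by (auto simp: \<alpha>_def)
  qed
  have "f ` {..<m} \<subseteq> fvs.span B" using sp by blast
  from fvs.independent_span_bound[OF B indep this]
  have "card (f ` {..<m}) \<le> card B" by blast
  then show ?thesis using card_image[OF inj] by simp
qed

definition dom2 :: "nat \<Rightarrow> (nat \<times> nat) set" where
  "dom2 n = {..<n} \<times> {1..<n}"

definition mono_fun :: "nat \<Rightarrow> nat \<Rightarrow> (nat \<times> nat \<Rightarrow> nat) \<Rightarrow> complex \<times> (nat \<Rightarrow> nat \<Rightarrow> complex) \<Rightarrow> complex" where
  "mono_fun n d A = (\<lambda>z. fst z ^ d * (\<Prod>kb\<in>dom2 n. snd z (fst kb) (snd kb) ^ A kb))"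

definition Idx :: "nat \<Rightarrow> nat \<Rightarrow> (nat \<times> (nat \<times> nat \<Rightarrow> nat)) set" where
  "Idx n D = {(d, A). d \<le> D \<and> A \<in> (\<Pi>\<^sub>E kb\<in>dom2 n. {..D}) \<and> (\<forall>b\<in>{1..<n}. (\<Sum>k<n. A (k, b)) = d)}"

definition Bset :: "nat \<Rightarrow> nat \<Rightarrow> (complex \<times> (nat \<Rightarrow> nat \<Rightarrow> complex) \<Rightarrow> complex) set" where
  "Bset n D = (\<lambda>(d, A). mono_fun n d A) ` Idx n D"

lemma finite_dom2: "finite (dom2 n)" unfolding dom2_def by simp

lemma card_Idx:
  assumes n: "1 \<le> n"
  shows "card (Idx n D) \<le> (D + 1) ^ ((n - 1)^2 + 1)"
proof -
  define dom1 where "dom1 = {..<n-1} \<times> {1..<n}"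
  define \<iota> where "\<iota> = (\<lambda>(d::nat, A::nat \<times> nat \<Rightarrow> nat). (d, restrict A dom1))"
  define Tgt where "Tgt = {..D} \<times> (\<Pi>\<^sub>E kb\<in>dom1. {..D})"
  have sub1: "dom1 \<subseteq> dom2 n" unfolding dom1_def dom2_def by auto
  have last: "A (n - 1, b) = d - (\<Sum>k<n-1. A (k, b))" if "(d, A) \<in> Idx n D" "b \<in> {1..<n}" for d A b
  proof -
    have "(\<Sum>k<n. A (k, b)) = d" using that unfolding Idx_def by auto
    moreover have "(\<Sum>k<n. A (k, b)) = (\<Sum>k<n-1. A (k, b)) + A (n - 1, b)"
    proof -
      obtain n' where n': "n = Suc n'" using n by (cases n) auto
      then show ?thesis by simp
    qed
    ultimately show ?thesis by simp
  qed
  have "inj_on \<iota> (Idx n D)"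
  proof (rule inj_onI)
    fix x y assume x: "x \<in> Idx n D" and y: "y \<in> Idx n D" and eq: "\<iota> x = \<iota> y"
    obtain d A where xd: "x = (d, A)" by (cases x)
    obtain d' A' where yd: "y = (d', A')" by (cases y)
    have dd: "d = d'" and rr: "restrict A dom1 = restrict A' dom1" using eq unfolding xd yd \<iota>_def by auto
    have "A kb = A' kb" for kb
    proof (cases "kb \<in> dom2 n")
      case False
      obtain a b where ab: "kb = (a, b)" by (cases kb)
      then show ?thesis using x y False unfolding xd yd Idx_def by (auto simp: PiE_def extensional_def)
    next
      case True
      then obtain k b where kb: "kb = (k, b)" "k < n" "b \<in> {1..<n}" unfolding dom2_def by auto
      show ?thesis
      proof (cases "k < n - 1")
        case True
        then have "kb \<in> dom1" using kb unfolding dom1_def by auto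
        then show ?thesis using rr by (metis restrict_apply')
      next
        case False
        then have k: "k = n - 1" using kb by simp
        have "(\<Sum>k<n-1. A (k, b)) = (\<Sum>k<n-1. A' (k, b))"
        proof (rule sum.cong[OF refl])
          fix k assume "k \<in> {..<n-1}"
          then have "(k, b) \<in> dom1" using kb unfolding dom1_def by auto
          then show "A (k, b) = A' (k, b)" using rr by (metis restrict_apply')
        qed
        then show ?thesis using last[OF x[unfolded xd] kb(3)] last[OF y[unfolded yd] kb(3)] dd kb k by simp
      qed
    qed
    then show "x = y" using xd yd dd by auto
  qed
  moreover have "\<iota> ` Idx n D \<subseteq> Tgt"
    unfolding Tgt_def \<iota>_def Idx_def using sub1 by (auto simp: PiE_def Pi_def)
  moreover have "finite Tgt" unfolding Tgt_def dom1_def by (simp add: finite_PiE)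
  ultimately have "card (Idx n D) \<le> card Tgt" by (rule card_inj_on_le)
  also have "card Tgt = (D + 1) * (D + 1) ^ ((n - 1) * (n - 1))"
    unfolding Tgt_def dom1_def by (simp add: card_cartesian_product card_PiE)
  also have "\<dots> = (D + 1) ^ ((n - 1)^2 + 1)" by (simp add: power2_eq_square)
  finally show ?thesis .
qed

lemma finite_Idx: "finite (Idx n D)"
proof -
  have "Idx n D \<subseteq> {..D} \<times> (\<Pi>\<^sub>E kb\<in>dom2 n. {..D})" unfolding Idx_def by auto
  moreover have "finite ({..D} \<times> (\<Pi>\<^sub>E kb\<in>dom2 n. {..D}))" by (simp add: finite_PiE finite_dom2)
  ultimately show ?thesis using finite_subset by blast
qed

lemma finite_Bset: "finite (Bset n D)"
  unfolding Bset_def using finite_Idx by simp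

lemma card_Bset: "1 \<le> n \<Longrightarrow> card (Bset n D) \<le> (D + 1) ^ ((n - 1)^2 + 1)"
  unfolding Bset_def using card_image_le[OF finite_Idx] card_Idx le_trans by blast

lemma MC_factor:
  assumes v: "v \<in> NN n" and k: "k < n"
  shows "(if v ! k = 0 then 1 else mu k (v ! k)) ^ e = (\<Prod>b\<in>{1..<n}. mu k b ^ (if v ! k = b then e else 0))"
proof -
  have "(\<Prod>b\<in>{1..<n}. mu k b ^ (if v ! k = b then e else 0)) = (\<Prod>b\<in>{1..<n}. if v ! k = b then mu k b ^ e else 1)"
    by (rule prod.cong) auto
  also have "\<dots> = (if v ! k \<in> {1..<n} then mu k (v ! k) ^ e else 1)" by (rule prod.delta') simp
  also have "\<dots> = (if v ! k = 0 then 1 else mu k (v ! k)) ^ e" using NN_nth_lt[OF v k] by auto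
  finally show ?thesis by simp
qed

lemma MC_power:
  assumes v: "v \<in> NN n"
  shows "moment_coord n mu v ^ e = (\<Prod>kb\<in>dom2 n. mu (fst kb) (snd kb) ^ (if v ! fst kb = snd kb then e else 0))"
proof -
  have "moment_coord n mu v ^ e = (\<Prod>k<n. (if v ! k = 0 then 1 else mu k (v ! k)) ^ e)"
    unfolding moment_coord_def by (rule prod_power_distrib)
  also have "\<dots> = (\<Prod>k<n. \<Prod>b\<in>{1..<n}. mu k b ^ (if v ! k = b then e else 0))"
    by (rule prod.cong[OF refl]) (simp add: MC_factor[OF v])
  also have "\<dots> = (\<Prod>kb\<in>dom2 n. mu (fst kb) (snd kb) ^ (if v ! fst kb = snd kb then e else 0))"
    unfolding dom2_def by (simp add: prod.cartesian_product split_def)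
  finally show ?thesis .
qed

definition Eexp :: "nat \<Rightarrow> (nat list \<Rightarrow>\<^sub>0 nat) \<Rightarrow> nat \<times> nat \<Rightarrow> nat" where
  "Eexp n mo = restrict (\<lambda>kb. \<Sum>v\<in>Poly_Mapping.keys mo. if v ! fst kb = snd kb then Poly_Mapping.lookup mo v else 0) (dom2 n)"

lemma mono_Phi:
  assumes K: "Poly_Mapping.keys mo \<subseteq> NN n"
  shows "mono_eval mo (Phi n c mu) = mono_fun n (mdeg mo) (Eexp n mo) (c, mu)"
proof -
  let ?K = "Poly_Mapping.keys mo" and ?e = "Poly_Mapping.lookup mo"
  have "mono_eval mo (Phi n c mu) = (\<Prod>v\<in>?K. (c * moment_coord n mu v) ^ ?e v)"
    unfolding mono_eval_fin by (rule prod.cong[OF refl]) (use K in \<open>auto simp: Phi_def\<close>)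
  also have "\<dots> = c ^ mdeg mo * (\<Prod>v\<in>?K. moment_coord n mu v ^ ?e v)"
    by (simp add: power_mult_distrib prod.distrib power_sum mdeg_def)
  also have "(\<Prod>v\<in>?K. moment_coord n mu v ^ ?e v) =
     (\<Prod>v\<in>?K. \<Prod>kb\<in>dom2 n. mu (fst kb) (snd kb) ^ (if v ! fst kb = snd kb then ?e v else 0))"
    by (rule prod.cong[OF refl]) (use K MC_power in blast)
  also have "\<dots> = (\<Prod>kb\<in>dom2 n. \<Prod>v\<in>?K. mu (fst kb) (snd kb) ^ (if v ! fst kb = snd kb then ?e v else 0))"
    by (rule prod.swap)
  also have "\<dots> = (\<Prod>kb\<in>dom2 n. mu (fst kb) (snd kb) ^ Eexp n mo kb)"
    by (rule prod.cong[OF refl]) (simp add: Eexp_def power_sum)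
  finally show ?thesis unfolding mono_fun_def by simp
qed

lemma Eexp_Idx:
  assumes K: "Poly_Mapping.keys mo \<subseteq> NN n" and D: "mdeg mo \<le> D"
  shows "(mdeg mo, Eexp n mo) \<in> Idx n D"
proof -
  let ?K = "Poly_Mapping.keys mo" and ?e = "Poly_Mapping.lookup mo"
  have bnd: "Eexp n mo kb \<le> D" if "kb \<in> dom2 n" for kb
  proof -
    have "Eexp n mo kb \<le> (\<Sum>v\<in>?K. ?e v)"
      unfolding Eexp_def using that by (simp, intro sum_mono) auto
    then show ?thesis using D unfolding mdeg_def by simp
  qed
  have cons: "(\<Sum>k<n. Eexp n mo (k, b)) = mdeg mo" if b: "b \<in> {1..<n}" for b
  proof -
    have "(\<Sum>k<n. Eexp n mo (k, b)) = (\<Sum>k<n. \<Sum>v\<in>?K. if v ! k = b then ?e v else 0)"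
      by (rule sum.cong[OF refl]) (use b in \<open>simp add: Eexp_def dom2_def\<close>)
    also have "\<dots> = (\<Sum>v\<in>?K. \<Sum>k<n. if v ! k = b then ?e v else 0)" by (rule sum.swap)
    also have "\<dots> = (\<Sum>v\<in>?K. ?e v)"
    proof (rule sum.cong[OF refl])
      fix v assume "v \<in> ?K"
      then have v: "v \<in> NN n" using K by blast
      obtain k0 where k0: "k0 < n" "v ! k0 = b" using NN_exists[OF v] b by auto
      have "(\<Sum>k<n. if v ! k = b then ?e v else 0) = (\<Sum>k<n. if k0 = k then ?e v else 0)"
        by (rule sum.cong[OF refl]) (use NN_unique[OF v] k0 in auto)
      also have "\<dots> = ?e v" using k0 by (simp add: sum.delta)
      finally show "(\<Sum>k<n. if v ! k = b then ?e v else 0) = ?e v" .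
    qed
    finally show ?thesis unfolding mdeg_def .
  qed
  have "Eexp n mo \<in> (\<Pi>\<^sub>E kb\<in>dom2 n. {..D})"
    using bnd by (auto simp: Eexp_def)
  then show ?thesis unfolding Idx_def using D cons by auto
qed

lemma mono_Phi_zero:
  assumes K: "\<not> Poly_Mapping.keys mo \<subseteq> NN n"
  shows "mono_eval mo (Phi n c mu) = 0"
proof -
  obtain v where v: "v \<in> Poly_Mapping.keys mo" "v \<notin> NN n" using K by blast
  have "Phi n c mu v ^ Poly_Mapping.lookup mo v = 0" using v by (simp add: Phi_def in_keys_iff)
  then show ?thesis unfolding mono_eval_fin by (intro prod_zero) (use v(1) in auto)
qed

lemma pf_Phi_span:
  assumes g: "pf D g"
  shows "(\<lambda>z. g (Phi n (fst z) (snd z))) \<in> fvs.span (Bset n D)"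
proof -
  obtain p where p: "g = mpoly_eval p" "\<And>mo. mo \<in> Poly_Mapping.keys p \<Longrightarrow> mdeg mo \<le> D"
    using g unfolding pf_def by blast
  have mono: "(\<lambda>z. mono_eval mo (Phi n (fst z) (snd z))) \<in> fvs.span (Bset n D)"
    if mo: "mo \<in> Poly_Mapping.keys p" for mo
  proof (cases "Poly_Mapping.keys mo \<subseteq> NN n")
    case True
    have "(\<lambda>z. mono_eval mo (Phi n (fst z) (snd z))) = mono_fun n (mdeg mo) (Eexp n mo)"
      using mono_Phi[OF True] by (auto simp: fun_eq_iff)
    moreover have "(mdeg mo, Eexp n mo) \<in> Idx n D" by (rule Eexp_Idx[OF True p(2)[OF mo]])
    ultimately have "(\<lambda>z. mono_eval mo (Phi n (fst z) (snd z))) \<in> Bset n D"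
      unfolding Bset_def by (metis (no_types, lifting) case_prod_conv image_eqI)
    then show ?thesis by (rule fvs.span_base)
  next
    case False
    then have "(\<lambda>z. mono_eval mo (Phi n (fst z) (snd z))) = 0"
      using mono_Phi_zero by (auto simp: fun_eq_iff)
    then show ?thesis using fvs.span_zero by simp
  qed
  have "(\<lambda>z. g (Phi n (fst z) (snd z))) =
      (\<Sum>mo\<in>Poly_Mapping.keys p. fscale (Poly_Mapping.lookup p mo) (\<lambda>z. mono_eval mo (Phi n (fst z) (snd z))))"
    unfolding p(1) by (simp add: fun_eq_iff sum_fun_apply' fscale_def mpoly_eval_fin)
  also have "\<dots> \<in> fvs.span (Bset n D)"
    by (intro fvs.span_sum fvs.span_scale mono)
  finally show ?thesis .
qed

lemma growth_MV:
  assumes n: "1 \<le> n"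
  shows "growth (moment_variety n (staircase n)) ((n - 1)^2 + 1) (2 ^ ((n - 1)^2 + 1))"
  unfolding growth_def
proof (intro allI impI)
  fix D m assume D: "1 \<le> D" and fm: "fam D (moment_variety n (staircase n)) m"
  let ?r = "(n - 1)^2 + 1"
  obtain q where q: "\<And>j. j < m \<Longrightarrow> pf D (q j)" "indep (moment_variety n (staircase n)) q m"
    using fm unfolding fam_def by blast
  define f where "f = (\<lambda>j z. q j (Phi n (fst z) (snd z)))"
  have sp: "f j \<in> fvs.span (Bset n D)" if "j < m" for j
    unfolding f_def by (rule pf_Phi_span[OF q(1)[OF that]])
  have ind: "\<forall>j<m. \<alpha> j = 0" if A: "\<And>z. (\<Sum>j<m. \<alpha> j * f j z) = 0" for \<alpha>
  proof -
    define G where "G = (\<lambda>x. \<Sum>j<m. \<alpha> j * q j x)"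
    have "pf D G" unfolding G_def by (intro pf_sum pf_scale q(1)) auto
    then have pG: "pfany G" by (rule pf_pfany)
    have cZ: "zariski_closed (NN n) {x \<in> ambient (NN n). \<forall>g\<in>{G}. g x = 0}"
      by (rule closed_zero_set) (use pG in blast)
    have "SPhi n \<subseteq> {x \<in> ambient (NN n). \<forall>g\<in>{G}. g x = 0}"
    proof
      fix x assume x: "x \<in> SPhi n"
      then obtain c mu where xe: "x = Phi n c mu" unfolding SPhi_def by blast
      have "G x = 0" using A[of "(c, mu)"] unfolding xe G_def f_def by simp
      then show "x \<in> {x \<in> ambient (NN n). \<forall>g\<in>{G}. g x = 0}" using x SPhi_amb by blast
    qed
    then have "moment_variety n (staircase n) \<subseteq> {x \<in> ambient (NN n). \<forall>g\<in>{G}. g x = 0}"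
      unfolding MV_def' by (rule closure_min[OF cZ])
    then have "\<forall>x\<in>moment_variety n (staircase n). G x = 0" by blast
    then have "\<forall>x\<in>moment_variety n (staircase n). (\<Sum>j<m. \<alpha> j * q j x) = 0" by (simp add: G_def)
    then show ?thesis using q(2)[unfolded indep_def, THEN spec, of \<alpha>] by blast
  qed
  have "m \<le> card (Bset n D)" by (rule fam_span_bound[OF finite_Bset sp ind]) auto
  also have "\<dots> \<le> (D + 1) ^ ?r" by (rule card_Bset[OF n])
  finally have "real m \<le> real (D + 1) ^ ?r" by (metis of_nat_le_iff of_nat_power)
  also have "real (D + 1) ^ ?r \<le> (2 * real D) ^ ?r"
    by (rule power_mono) (use D in auto)
  also have "\<dots> = 2 ^ ?r * real D ^ ?r" by (simp add: power_mult_distrib)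
  finally show "real m \<le> 2 ^ ?r * real D ^ ?r" .
qed

definition allowed :: "nat \<Rightarrow> (nat \<times> nat) set \<Rightarrow> nat list set" where
  "allowed n E = {v \<in> NN n. \<forall>k<n. v ! k \<noteq> 0 \<longrightarrow> (k, v ! k) \<in> E}"

definition strict_step :: "nat \<Rightarrow> (nat \<times> nat) set \<Rightarrow> (nat \<times> nat) set \<Rightarrow> bool" where
  "strict_step n E E' \<longleftrightarrow> E \<subseteq> E' \<and> (\<exists>w. w \<in> allowed n E' \<and> w \<notin> allowed n E)"

definition Bm :: "nat \<Rightarrow> nat \<Rightarrow> (nat \<times> nat) set" where
  "Bm n m = {(k, b). (k \<le> m \<and> 1 \<le> b \<and> b \<le> m) \<or> (m < k \<and> k < n \<and> b = k)}"

definition Fph :: "nat \<Rightarrow> nat \<Rightarrow> nat \<Rightarrow> (nat \<times> nat) set" where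
  "Fph n m j = Bm n m \<union> {(k, b). b = m + 1 \<and> k < j \<and> k \<le> m} \<union> {(k, b). k = m + 1 \<and> 1 \<le> b \<and> m + 1 + b \<le> j}"

lemma map_nth_upt: "k < n \<Longrightarrow> map f [0..<n] ! k = f k" by simp

lemma perm_list_allowed:
  assumes im: "\<sigma> ` {..<n} \<subseteq> {..<n}" and inj: "inj_on \<sigma> {..<n}"
    and E: "\<And>k. k < n \<Longrightarrow> \<sigma> k \<noteq> 0 \<Longrightarrow> (k, \<sigma> k) \<in> E"
  shows "map \<sigma> [0..<n] \<in> allowed n E"
  unfolding allowed_def using NN_map[OF im inj] E by auto

lemma perm_list_not_allowed:
  assumes "k < n" "\<sigma> k \<noteq> 0" "(k, \<sigma> k) \<notin> E"
  shows "map \<sigma> [0..<n] \<notin> allowed n E"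
  unfolding allowed_def using assms by auto

lemma Fph_0: "Fph n m 0 = Bm n m"
  unfolding Fph_def by auto

lemma Fph_last: "m + 1 < n \<Longrightarrow> Fph n m (2 * m + 1) = Bm n (m + 1)"
  unfolding Fph_def Bm_def by auto

lemma Fph_mono: "Fph n m j \<subseteq> Fph n m (Suc j)"
  unfolding Fph_def by auto

lemma phase_step:
  assumes mn: "m + 1 < n" and j: "j < 2 * m + 1"
  shows "strict_step n (Fph n m j) (Fph n m (Suc j))"
proof (cases "j \<le> m")
  case True
  define \<sigma> where "\<sigma> = (\<lambda>x. if x = 0 then (if j = 0 then m + 1 else j)
                         else if x = j then m + 1 else if x = m + 1 then 0 else x)"
  have im: "\<sigma> ` {..<n} \<subseteq> {..<n}" using mn True unfolding \<sigma>_def by auto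
  have inj: "inj_on \<sigma> {..<n}" using mn True unfolding \<sigma>_def inj_on_def by auto
  have "map \<sigma> [0..<n] \<in> allowed n (Fph n m (Suc j))"
  proof (rule perm_list_allowed[OF im inj])
    fix k assume k: "k < n" "\<sigma> k \<noteq> 0"
    show "(k, \<sigma> k) \<in> Fph n m (Suc j)"
      using k True mn unfolding \<sigma>_def Fph_def Bm_def by (auto split: if_splits)
  qed
  moreover have "map \<sigma> [0..<n] \<notin> allowed n (Fph n m j)"
  proof (cases "j = 0")
    case True
    show ?thesis by (rule perm_list_not_allowed[of 0]) (use True mn in \<open>auto simp: \<sigma>_def Fph_def Bm_def\<close>)
  next
    case False
    show ?thesis by (rule perm_list_not_allowed[of j]) (use False True mn in \<open>auto simp: \<sigma>_def Fph_def Bm_def\<close>)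
  qed
  ultimately show ?thesis unfolding strict_step_def using Fph_mono by blast
next
  case False
  define b where "b = j - m"
  have b: "1 \<le> b" "b \<le> m" "j = m + b" using False j unfolding b_def by auto
  define \<sigma> where "\<sigma> = (\<lambda>x. if x = m + 1 then b else if x = b then 0 else if x = 0 then m + 1 else x)"
  have im: "\<sigma> ` {..<n} \<subseteq> {..<n}" using mn b unfolding \<sigma>_def by auto
  have inj: "inj_on \<sigma> {..<n}" using mn b unfolding \<sigma>_def inj_on_def by auto
  have "map \<sigma> [0..<n] \<in> allowed n (Fph n m (Suc j))"
  proof (rule perm_list_allowed[OF im inj])
    fix k assume k: "k < n" "\<sigma> k \<noteq> 0"
    show "(k, \<sigma> k) \<in> Fph n m (Suc j)"
      using k b mn unfolding \<sigma>_def Fph_def Bm_def by (auto split: if_splits)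
  qed
  moreover have "map \<sigma> [0..<n] \<notin> allowed n (Fph n m j)"
    by (rule perm_list_not_allowed[of "m + 1"]) (use b mn in \<open>auto simp: \<sigma>_def Fph_def Bm_def\<close>)
  ultimately show ?thesis unfolding strict_step_def using Fph_mono by blast
qed

lemma pattern_chain:
  assumes "m < n"
  shows "\<exists>Es. Es 0 = Bm n 0 \<and> Es (m^2) = Bm n m \<and> (\<forall>i<m^2. strict_step n (Es i) (Es (Suc i)))"
  using assms
proof (induction m)
  case 0
  show ?case by (rule exI[of _ "\<lambda>_. Bm n 0"]) simp
next
  case (Suc m)
  then obtain Es where Es: "Es 0 = Bm n 0" "Es (m^2) = Bm n m" "\<forall>i<m^2. strict_step n (Es i) (Es (Suc i))"
    by auto
  have mn: "m + 1 < n" using Suc.prems by simp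
  define Es' where "Es' = (\<lambda>i. if i \<le> m^2 then Es i else Fph n m (i - m^2))"
  have e1: "Es' i = Fph n m (i - m^2)" if "m^2 \<le> i" for i
    using that Es(2) Fph_0 unfolding Es'_def by (cases "i = m^2") auto
  have "Es' 0 = Bm n 0" using Es(1) unfolding Es'_def by simp
  moreover have "Es' ((Suc m)^2) = Bm n (Suc m)"
  proof -
    have "(Suc m)^2 - m^2 = 2 * m + 1" by (simp add: power2_eq_square)
    have L: "Fph n m (Suc (m + m)) = Bm n (Suc m)" using Fph_last[OF mn] by (simp add: mult_2)
    show ?thesis using e1[of "(Suc m)^2"] L by (simp add: power2_eq_square)
  qed
  moreover have "strict_step n (Es' i) (Es' (Suc i))" if i: "i < (Suc m)^2" for i
  proof (cases "i < m^2")
    case True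
    then show ?thesis using Es(3) unfolding Es'_def by simp
  next
    case False
    then have "Es' i = Fph n m (i - m^2)" "Es' (Suc i) = Fph n m (Suc (i - m^2))"
      using e1[of i] e1[of "Suc i"] by (auto simp: Suc_diff_le)
    moreover have "i - m^2 < 2 * m + 1" using i False by (simp add: power2_eq_square)
    ultimately show ?thesis using phase_step[OF mn] by simp
  qed
  ultimately show ?case by blast
qed

lemma allowed_B0: "[0..<n] \<in> allowed n (Bm n 0)"
proof -
  have "map (\<lambda>x. x) [0..<n] \<in> allowed n (Bm n 0)"
    by (rule perm_list_allowed) (auto simp: Bm_def)
  then show ?thesis by simp
qed

definition SE :: "nat \<Rightarrow> (nat \<times> nat) set \<Rightarrow> (nat list \<Rightarrow> complex) set" where
  "SE n E = {Phi n c mu | c mu. \<forall>k b. (k, b) \<notin> E \<longrightarrow> mu k b = 0}"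

definition CE :: "nat \<Rightarrow> (nat \<times> nat) set \<Rightarrow> (nat list \<Rightarrow> complex) set" where
  "CE n E = zariski_closure (NN n) (SE n E)"

lemma SE_amb: "SE n E \<subseteq> ambient (NN n)"
  unfolding SE_def Phi_def ambient_def by auto

lemma SE_sub: "SE n E \<subseteq> SPhi n"
  unfolding SE_def SPhi_def by blast

lemma SE_mono: "E \<subseteq> E' \<Longrightarrow> SE n E \<subseteq> SE n E'"
  unfolding SE_def by blast

lemma UP_Phi_line:
  "(\<lambda>s. Phi n (c1 + s * (c2 - c1)) (\<lambda>k b. mu1 k b + s * (mu2 k b - mu1 k b)) v) \<in> UP"
proof (cases "v \<in> NN n")
  case True
  have f: "(\<lambda>s. if v ! k = 0 then 1 else mu1 k (v ! k) + s * (mu2 k (v ! k) - mu1 k (v ! k))) \<in> UP" for k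
    by (cases "v ! k = 0") (simp_all add: UP_const UP_add UP_mult UP_id)
  have "(\<lambda>s. (c1 + s * (c2 - c1)) *
      (\<Prod>k<n. if v ! k = 0 then 1 else mu1 k (v ! k) + s * (mu2 k (v ! k) - mu1 k (v ! k)))) \<in> UP"
    by (intro UP_mult UP_add UP_const UP_id UP_prod f) simp
  then show ?thesis using True by (simp add: Phi_def moment_coord_def)
next
  case False then show ?thesis by (simp add: Phi_def UP_const)
qed

lemma CE_irr: "irreducible_closed (NN n) (CE n E)"
  unfolding CE_def
proof (rule irr_closure[OF SE_amb])
  show "SE n E \<noteq> {}" unfolding SE_def by auto
  fix f g :: "(nat list \<Rightarrow> complex) \<Rightarrow> complex"
  assume f: "pfany f" and g: "pfany g" and fx: "\<exists>x\<in>SE n E. f x \<noteq> 0" and gx: "\<exists>x\<in>SE n E. g x \<noteq> 0"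
  obtain c1 mu1 where 1: "\<forall>k b. (k, b) \<notin> E \<longrightarrow> mu1 k b = 0" "f (Phi n c1 mu1) \<noteq> 0"
    using fx unfolding SE_def by blast
  obtain c2 mu2 where 2: "\<forall>k b. (k, b) \<notin> E \<longrightarrow> mu2 k b = 0" "g (Phi n c2 mu2) \<noteq> 0"
    using gx unfolding SE_def by blast
  define L where "L = (\<lambda>s v. Phi n (c1 + s * (c2 - c1)) (\<lambda>k b. mu1 k b + s * (mu2 k b - mu1 k b)) v)"
  have LS: "L s \<in> SE n E" for s
    unfolding L_def SE_def using 1(1) 2(1) by (auto intro!: exI[of _ "c1 + s * (c2 - c1)"])
  have uf: "(\<lambda>s. f (L s)) \<in> UP" unfolding L_def by (rule UP_comp'[OF f UP_Phi_line])
  have ug: "(\<lambda>s. g (L s)) \<in> UP" unfolding L_def by (rule UP_comp'[OF g UP_Phi_line])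
  have "L 0 = Phi n c1 mu1" "L 1 = Phi n c2 mu2" unfolding L_def by (simp_all add: fun_eq_iff)
  then obtain s where "f (L s) * g (L s) \<noteq> 0" using UP_prod_nz[OF uf ug, of 0 1] 1 2 by auto
  then show "\<exists>x\<in>SE n E. f x * g x \<noteq> 0" using LS by blast
qed

lemma CE_sub_MV: "CE n E \<subseteq> moment_variety n (staircase n)"
  unfolding CE_def MV_def' by (rule closure_mono[OF SE_sub])

lemma CE_mono: "E \<subseteq> E' \<Longrightarrow> CE n E \<subseteq> CE n E'"
  unfolding CE_def by (rule closure_mono[OF SE_mono])

lemma CE_point:
  assumes w: "w \<in> allowed n E"
  shows "\<exists>x\<in>CE n E. x w \<noteq> 0"
proof -
  define x where "x = Phi n 1 (\<lambda>k b. if (k, b) \<in> E then 1 else 0)"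
  have "x \<in> SE n E" unfolding x_def SE_def
    by (rule CollectI, rule exI[of _ 1], rule exI[of _ "\<lambda>k b. if (k, b) \<in> E then 1 else 0"]) simp
  then have "x \<in> CE n E" unfolding CE_def using closure_sup by blast
  moreover have "x w = 1"
  proof -
    have "x w = (\<Prod>k<n. if w ! k = 0 then 1 else (if (k, w ! k) \<in> E then 1 else 0))"
      using w unfolding x_def Phi_def moment_coord_def allowed_def by simp
    also have "\<dots> = (\<Prod>k<n. (1::complex))"
      by (rule prod.cong[OF refl]) (use w in \<open>auto simp: allowed_def\<close>)
    finally show ?thesis by simp
  qed
  ultimately show ?thesis by (intro bexI[of _ x]) auto
qed

lemma CE_vanish:
  assumes w: "w \<in> NN n" "w \<notin> allowed n E"
  shows "\<forall>x\<in>CE n E. x w = 0"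
proof -
  have cZ: "zariski_closed (NN n) {x \<in> ambient (NN n). \<forall>g\<in>{\<lambda>x. x w}. g x = 0}"
    by (rule closed_zero_set) (auto simp: pfany_var)
  obtain k where k: "k < n" "w ! k \<noteq> 0" "(k, w ! k) \<notin> E" using w unfolding allowed_def by auto
  have "SE n E \<subseteq> {x \<in> ambient (NN n). \<forall>g\<in>{\<lambda>x. x w}. g x = 0}"
  proof
    fix x assume x: "x \<in> SE n E"
    then obtain c mu where xe: "x = Phi n c mu" "\<forall>k b. (k, b) \<notin> E \<longrightarrow> mu k b = 0"
      unfolding SE_def by blast
    have "moment_coord n mu w = 0"
      unfolding moment_coord_def by (rule prod_zero) (use k xe(2) in auto)
    then have "x w = 0" using xe(1) by (simp add: Phi_def)
    then show "x \<in> {x \<in> ambient (NN n). \<forall>g\<in>{\<lambda>x. x w}. g x = 0}" using x SE_amb by blast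
  qed
  then have "CE n E \<subseteq> {x \<in> ambient (NN n). \<forall>g\<in>{\<lambda>x. x w}. g x = 0}"
    unfolding CE_def by (rule closure_min[OF cZ])
  show ?thesis
  proof
    fix x assume "x \<in> CE n E"
    then have "x \<in> {x \<in> ambient (NN n). \<forall>g\<in>{\<lambda>x. x w}. g x = 0}" using \<open>CE n E \<subseteq> _\<close> by (rule subsetD[rotated])
    then show "x w = 0" by simp
  qed
qed

lemma CE_strict: "strict_step n E E' \<Longrightarrow> CE n E \<subset> CE n E'"
proof -
  assume st: "strict_step n E E'"
  then obtain w where w: "w \<in> allowed n E'" "w \<notin> allowed n E" and EE: "E \<subseteq> E'"
    unfolding strict_step_def by blast
  have wN: "w \<in> NN n" using w(1) unfolding allowed_def by blast
  obtain x where x: "x \<in> CE n E'" "x w \<noteq> 0" using CE_point[OF w(1)] by blast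
  have "x \<notin> CE n E" using CE_vanish[OF wN w(2)] x by blast
  then show ?thesis using CE_mono[OF EE] x by blast
qed

definition Z0 :: "(nat list \<Rightarrow> complex) set" where
  "Z0 = {\<lambda>v. 0}"

lemma Z0_irr: "irreducible_closed (NN n) Z0"
proof -
  have eq: "Z0 = {x \<in> ambient (NN n). \<forall>g\<in>range (\<lambda>v x. x v). g x = 0}"
    unfolding Z0_def ambient_def by (auto simp: fun_eq_iff)
  have cl: "zariski_closed (NN n) Z0"
    unfolding eq by (rule closed_zero_set) (auto simp: pfany_var)
  show ?thesis
    unfolding irreducible_closed_def
  proof (intro conjI allI impI)
    show "zariski_closed (NN n) Z0" by (rule cl)
    show "Z0 \<noteq> {}" unfolding Z0_def by simp
    fix A B assume AB: "zariski_closed (NN n) A \<and> zariski_closed (NN n) B \<and> Z0 = A \<union> B"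
    then show "Z0 = A \<or> Z0 = B" unfolding Z0_def by blast
  qed
qed

lemma Z0_sub_CE: "Z0 \<subseteq> CE n E"
proof -
  have "Phi n 0 (\<lambda>k b. 0) \<in> SE n E" unfolding SE_def by auto
  moreover have "Phi n 0 (\<lambda>k b. 0) = (\<lambda>v. 0)" by (simp add: Phi_def fun_eq_iff)
  ultimately have "(\<lambda>v. 0) \<in> SE n E" by simp
  then have "(\<lambda>v. 0) \<in> CE n E" unfolding CE_def using closure_sup[of "SE n E" "NN n"] by (rule subsetD[rotated])
  then show ?thesis unfolding Z0_def by simp
qed

lemma Z0_strict: "w \<in> allowed n E \<Longrightarrow> Z0 \<subset> CE n E"
proof -
  assume "w \<in> allowed n E"
  then obtain x where x: "x \<in> CE n E" "x w \<noteq> 0" using CE_point by blast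
  have "x \<notin> Z0" using x(2) unfolding Z0_def by auto
  then show ?thesis using x(1) Z0_sub_CE[of n E] by blast
qed

lemma krull_MV:
  assumes n: "2 \<le> n"
  shows "krull_dim (NN n) (moment_variety n (staircase n)) = (n - 1)^2 + 1"
proof -
  let ?V = "moment_variety n (staircase n)" and ?r = "(n - 1)^2 + 1"
  define K where "K = {k. \<exists>C :: nat \<Rightarrow> (nat list \<Rightarrow> complex) set.
      (\<forall>j\<le>k. irreducible_closed (NN n) (C j) \<and> C j \<subseteq> ?V) \<and> (\<forall>j<k. C j \<subset> C (Suc j))}"
  have gV: "growth ?V ?r (2 ^ ?r)" by (rule growth_MV) (use n in simp)
  have up: "k \<le> ?r" if "k \<in> K" for k
    using that chain_bound[OF _ _ gV] unfolding K_def by blast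
  have "?r \<in> K"
  proof -
    obtain Es where Es: "Es 0 = Bm n 0" "\<forall>i<(n-1)^2. strict_step n (Es i) (Es (Suc i))"
      using pattern_chain[of "n - 1" n] n by auto
    define C where "C = (\<lambda>j. if j = 0 then Z0 else CE n (Es (j - 1)))"
    have "irreducible_closed (NN n) (C j) \<and> C j \<subseteq> ?V" for j
    proof (cases "j = 0")
      case True
      have "Z0 \<subseteq> ?V" using Z0_sub_CE[of n "Es 0"] CE_sub_MV[of n "Es 0"] by (rule subset_trans)
      then show ?thesis unfolding C_def using True Z0_irr by simp
    next
      case False
      then show ?thesis unfolding C_def using CE_irr CE_sub_MV by simp
    qed
    moreover have "C j \<subset> C (Suc j)" if j: "j < ?r" for j
    proof (cases j)
      case 0
      then show ?thesis unfolding C_def using Z0_strict[OF allowed_B0[of n]] Es(1) by simp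
    next
      case (Suc i)
      then have "i < (n-1)^2" using j by simp
      then show ?thesis unfolding C_def using Suc Es(2) CE_strict by simp
    qed
    ultimately show ?thesis unfolding K_def by blast
  qed
  then have "Sup K = ?r" using up by (intro cSup_eq_maximum) auto
  then show ?thesis unfolding krull_dim_def K_def by simp
qed

theorem proposition2p4:
  fixes n :: nat
  assumes "n \<ge> 2"
  shows "bij_betw (ident_matrix n) (N_lambda n (staircase n)) (perm_matrices n)
    \<and> card (N_lambda n (staircase n)) = fact n
    \<and> moment_variety n (staircase n) =
        (\<lambda>z. \<lambda>is. if is \<in> N_lambda n (staircase n) then z (ident_matrix n is) else 0)
          ` birkhoff_toric_variety n
    \<and> proj_dim (N_lambda n (staircase n)) (moment_variety n (staircase n)) = (n - 1)^2"
proof (intro conjI)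
  show "bij_betw (ident_matrix n) (N_lambda n (staircase n)) (perm_matrices n)" by (rule bij_ident)
  show "card (N_lambda n (staircase n)) = fact n" by (rule card_NN)
  show "moment_variety n (staircase n) =
        (\<lambda>z. \<lambda>is. if is \<in> N_lambda n (staircase n) then z (ident_matrix n is) else 0)
          ` birkhoff_toric_variety n"
    using MV_eq[of n] unfolding Rl_def .
  show "proj_dim (N_lambda n (staircase n)) (moment_variety n (staircase n)) = (n - 1)^2"
    unfolding proj_dim_def using krull_MV[OF assms] by simp
qed

end
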